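(* Assume $|\chi|=\infty$ and that $q=\chi^{-1}(a)$ has finite order $s$. For every $m\ge0$ there is an $H$-module $E_m\in P_m$ with $V_{s+1}(\varepsilon)^{\otimes m}\cong V_{ms+1}(\varepsilon)\oplus E_m$, where $P_0=\{0\}$ and, for $m\ge1$, $P_m$ is the class of modules of the form $\bigoplus_{i=1}^{ms}n_iV_i(\lambda_i)$ with $\lambda_i\in\hat G$ and integers $n_i\ge0$.
   Context: Let $k$ be an algebraically closed field of characteristic zero, $G$ a group, $a$ a central element of $G$, $\hat G$ the group of characters $G\to k^\times$ with identity $\varepsilon$, and $\chi\in\hat G$ with $\chi(a)\ne1$. $H=kG(\chi^{-1},a,0)$ is the Hopf algebra generated by the group $G$ and $x$ with $xg=\chi^{-1}(g)gx$, $\Delta(g)=g\otimes g$, $\Delta(x)=x\otimes a+1\otimes x$; tensor products of $H$-modules: $g(m\otimes n)=gm\otimes gn$, $x(m\otimes n)=xm\otimes an+m\otimes xn$. $V_t(\lambda)$ ($\lambda\in\hat G$, $t\ge1$) has basis $m_0,\dots,m_{t-1}$, $gm_i=\chi^i(g)\lambda(g)m_i$, $xm_i=m_{i+1}$ ($i\le t-2$), $xm_{t-1}=0$. $V^{\otimes0}=V_1(\varepsilon)$; $nM$ is the direct sum of $n$ copies of $M$. *)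

theory Defs
  imports "Jordan_Normal_Form.Matrix" "HOL-Algebra.Group" "HOL-Computational_Algebra.Polynomial"
begin

text \<open>Algebraically closed field (the characteristic-zero hypothesis is the type class field_char_0).\<close>
definition alg_closed :: "'k::field itself \<Rightarrow> bool" where
  "alg_closed _ \<longleftrightarrow> (\<forall>p::'k poly. degree p \<ge> 1 \<longrightarrow> (\<exists>x. poly p x = 0))"

definition character :: "('g, 'b) monoid_scheme \<Rightarrow> ('g \<Rightarrow> 'k::field) \<Rightarrow> bool" where
  "character G \<mu> \<longleftrightarrow> (\<forall>g\<in>carrier G. \<mu> g \<noteq> 0) \<and>
     (\<forall>g\<in>carrier G. \<forall>h\<in>carrier G. \<mu> (g \<otimes>\<^bsub>G\<^esub> h) = \<mu> g * \<mu> h)"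

definition eps_char :: "'g \<Rightarrow> 'k::field" where
  "eps_char = (\<lambda>_. 1)"

text \<open>A finite-dimensional H-module, H = kG(chi^{-1},a,0), given in matrix form with respect
  to a chosen basis: the matrices of the action of every g in G, and the matrix of the action of x.\<close>
type_synonym ('g, 'k) hmod = "('g \<Rightarrow> 'k mat) \<times> 'k mat"

definition hdim :: "('g, 'k) hmod \<Rightarrow> nat" where
  "hdim M = dim_row (snd M)"

definition hmod_iso :: "('g, 'b) monoid_scheme \<Rightarrow> ('g, 'k::field) hmod \<Rightarrow> ('g, 'k) hmod \<Rightarrow> bool" where
  "hmod_iso G M N \<longleftrightarrow> (\<exists>P Q. P \<in> carrier_mat (hdim N) (hdim M) \<and> Q \<in> carrier_mat (hdim M) (hdim N) \<and>
      P * Q = 1\<^sub>m (hdim N) \<and> Q * P = 1\<^sub>m (hdim M) \<and>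
      (\<forall>g\<in>carrier G. P * fst M g = fst N g * P) \<and> P * snd M = snd N * P)"

text \<open>The module V_t(lambda): basis m_0..m_{t-1}, g m_i = chi^i(g) lambda(g) m_i, x m_i = m_{i+1},
  x m_{t-1} = 0 (columns are the images of basis vectors).\<close>
definition Vmod :: "('g \<Rightarrow> 'k::field) \<Rightarrow> nat \<Rightarrow> ('g \<Rightarrow> 'k) \<Rightarrow> ('g, 'k) hmod" where
  "Vmod \<chi> t \<mu> = ((\<lambda>g. mat t t (\<lambda>(i,j). if i = j then \<chi> g ^ i * \<mu> g else 0)),
                  mat t t (\<lambda>(i,j). if i = j + 1 then 1 else 0))"

definition kron :: "'k::field mat \<Rightarrow> 'k mat \<Rightarrow> 'k mat" where
  "kron A B = mat (dim_row A * dim_row B) (dim_col A * dim_col B)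
     (\<lambda>(i,j). A $$ (i div dim_row B, j div dim_col B) * B $$ (i mod dim_row B, j mod dim_col B))"

text \<open>Tensor product of H-modules: g(m\<otimes>n) = gm\<otimes>gn, x(m\<otimes>n) = xm\<otimes>an + m\<otimes>xn.\<close>
definition htensor :: "'g \<Rightarrow> ('g, 'k::field) hmod \<Rightarrow> ('g, 'k) hmod \<Rightarrow> ('g, 'k) hmod" where
  "htensor a M N = ((\<lambda>g. kron (fst M g) (fst N g)),
                    kron (snd M) (fst N a) + kron (1\<^sub>m (hdim M)) (snd N))"

definition hdsum :: "('g, 'k::field) hmod \<Rightarrow> ('g, 'k) hmod \<Rightarrow> ('g, 'k) hmod" where
  "hdsum M N = ((\<lambda>g. four_block_mat (fst M g) (0\<^sub>m (hdim M) (hdim N)) (0\<^sub>m (hdim N) (hdim M)) (fst N g)),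
                four_block_mat (snd M) (0\<^sub>m (hdim M) (hdim N)) (0\<^sub>m (hdim N) (hdim M)) (snd N))"

definition hzero :: "('g, 'k::field) hmod" where
  "hzero = ((\<lambda>g. 0\<^sub>m 0 0), 0\<^sub>m 0 0)"

fun hdsum_list :: "('g, 'k::field) hmod list \<Rightarrow> ('g, 'k) hmod" where
  "hdsum_list [] = hzero"
| "hdsum_list (M # Ms) = hdsum M (hdsum_list Ms)"

fun htpow :: "('g \<Rightarrow> 'k::field) \<Rightarrow> 'g \<Rightarrow> ('g, 'k) hmod \<Rightarrow> nat \<Rightarrow> ('g, 'k) hmod" where
  "htpow \<chi> a V 0 = Vmod \<chi> 1 eps_char"
| "htpow \<chi> a V (Suc m) = htensor a (htpow \<chi> a V m) V"

definition in_P :: "('g, 'b) monoid_scheme \<Rightarrow> ('g \<Rightarrow> 'k::field) \<Rightarrow> nat \<Rightarrow> nat \<Rightarrow> ('g, 'k) hmod \<Rightarrow> bool" where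
  "in_P G \<chi> s m E \<longleftrightarrow> (\<exists>L. (\<forall>(i, \<mu>)\<in>set L. 1 \<le> i \<and> i \<le> m * s \<and> character G \<mu>) \<and>
       E = hdsum_list (map (\<lambda>(i, \<mu>). Vmod \<chi> i \<mu>) L))"

end

theory Submission
  imports Defs "Jordan_Normal_Form.Determinant"
begin

definition gr :: "(nat \<Rightarrow> nat) \<Rightarrow> (nat \<Rightarrow> nat) \<Rightarrow> nat \<Rightarrow> 'a::zero mat \<Rightarrow> bool" where
  "gr d1 d2 k A \<longleftrightarrow> (\<forall>i<dim_row A. \<forall>j<dim_col A. A $$ (i,j) \<noteq> 0 \<longrightarrow> d1 i = d2 j + k)"

lemma mult_entry:
  assumes "i < dim_row A" "j < dim_col B" "dim_col A = dim_row B"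
  shows "(A*B) $$ (i,j) = (\<Sum>k<dim_row B. A$$(i,k) * B$$(k,j))"
  using assms by (simp add: scalar_prod_def lessThan_atLeast0)

lemma sum_single:
  assumes "k0 < (n::nat)" "\<And>k. k < n \<Longrightarrow> k \<noteq> k0 \<Longrightarrow> f k = (0::'a::comm_monoid_add)"
  shows "(\<Sum>k<n. f k) = f k0"
proof -
  have "(\<Sum>k<n. f k) = (\<Sum>k\<in>{k0}. f k)"
    using assms by (intro sum.mono_neutral_right) auto
  then show ?thesis by simp
qed

lemma sum_nonzero_ex: "(\<Sum>k<(n::nat). f k) \<noteq> (0::'a::comm_monoid_add) \<Longrightarrow> \<exists>k<n. f k \<noteq> 0"
  by (metis lessThan_iff sum.neutral)

lemma gr_mult:
  assumes "gr d1 d2 k A" "gr d2 d3 l B" "dim_col A = dim_row B"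
  shows "gr d1 d3 (k+l) (A*B :: 'a::semiring_0 mat)"
  unfolding gr_def
proof (intro allI impI)
  fix i j assume i: "i < dim_row (A*B)" and j: "j < dim_col (A*B)" and nz: "(A*B) $$ (i,j) \<noteq> 0"
  have "(\<Sum>k<dim_row B. A$$(i,k) * B$$(k,j)) \<noteq> 0" using nz i j assms(3) mult_entry[of i A j B] by simp
  then obtain m where m: "m < dim_row B" "A$$(i,m) * B$$(m,j) \<noteq> 0" using sum_nonzero_ex by blast
  then have "A$$(i,m) \<noteq> 0" "B$$(m,j) \<noteq> 0" by auto
  then show "d1 i = d3 j + (k + l)" using assms(1,2) i j m(1) assms(3) unfolding gr_def by force
qed

lemma gr_one: "gr d d 0 (1\<^sub>m n)"
  unfolding gr_def by auto

lemma pow_mat_Suc_left: "A \<in> carrier_mat n n \<Longrightarrow> A ^\<^sub>m Suc k = A * A ^\<^sub>m k"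
proof (induction k)
  case 0 then show ?case by simp
next
  case (Suc k)
  have "A ^\<^sub>m Suc (Suc k) = (A * A ^\<^sub>m k) * A" using Suc by simp
  also have "\<dots> = A * (A ^\<^sub>m k * A)" using Suc.prems by (simp add: assoc_mult_mat[of _ n n _ n _ n])
  finally show ?case by simp
qed

lemma pow_mat_add: "A \<in> carrier_mat n n \<Longrightarrow> A ^\<^sub>m (a + b) = A ^\<^sub>m a * A ^\<^sub>m b"
proof (induction b)
  case 0 then show ?case by simp
next
  case (Suc b)
  have "A ^\<^sub>m (a + Suc b) = (A ^\<^sub>m a * A ^\<^sub>m b) * A" using Suc by simp
  also have "\<dots> = A ^\<^sub>m a * (A ^\<^sub>m b * A)" using Suc.prems by (simp add: assoc_mult_mat[of _ n n _ n _ n])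
  finally show ?case by simp
qed

lemma gr_pow: assumes "gr d d 1 X" "X \<in> carrier_mat n n" shows "gr d d k (X ^\<^sub>m k :: 'a::semiring_1 mat)"
proof (induction k)
  case 0 then show ?case using assms by (simp add: gr_one)
next
  case (Suc k)
  have "gr d d (k+1) (X ^\<^sub>m k * X)" by (rule gr_mult[OF Suc assms(1)]) (use assms in auto)
  then show ?case by simp
qed

lemma gr_nilp:
  assumes "gr d d 1 X" "X \<in> carrier_mat n n" "\<And>i. i < n \<Longrightarrow> d i \<le> D" "D < k"
  shows "X ^\<^sub>m k = (0\<^sub>m n n :: 'a::semiring_1 mat)"
proof (rule eq_matI)
  fix i j assume i: "i < dim_row (0\<^sub>m n n :: 'a mat)" and j: "j < dim_col (0\<^sub>m n n :: 'a mat)"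
  have g: "gr d d k (X ^\<^sub>m k)" by (rule gr_pow[OF assms(1,2)])
  show "(X ^\<^sub>m k) $$ (i,j) = 0\<^sub>m n n $$ (i,j)"
  proof (rule ccontr)
    assume "(X ^\<^sub>m k) $$ (i,j) \<noteq> 0\<^sub>m n n $$ (i,j)"
    then have "(X ^\<^sub>m k) $$ (i,j) \<noteq> 0" using i j by simp
    then have "d i = d j + k" using g i j assms(2) unfolding gr_def by auto
    then show False using assms(3)[of i] assms(4) i by simp
  qed
qed (use assms in auto)

definition dmat :: "nat \<Rightarrow> (nat \<Rightarrow> 'a::zero) \<Rightarrow> 'a mat" where
  "dmat n f = mat n n (\<lambda>(i,j). if i = j then f i else 0)"

lemma dmat_left: assumes "A \<in> carrier_mat n m"
  shows "dmat n f * A = mat n m (\<lambda>(i,j). f i * A $$ (i,j))"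
proof (rule eq_matI)
  fix i j assume "i < dim_row (mat n m (\<lambda>(i,j). f i * A $$ (i,j)))" "j < dim_col (mat n m (\<lambda>(i,j). f i * A $$ (i,j)))"
  then have ij: "i < n" "j < m" by auto
  have "(dmat n f * A) $$ (i,j) = (\<Sum>k<n. dmat n f $$ (i,k) * A $$ (k,j))"
    using ij assms mult_entry[of i "dmat n f" j A] by (simp add: dmat_def)
  also have "\<dots> = dmat n f $$ (i,i) * A $$ (i,j)"
    by (rule sum_single) (use ij in \<open>auto simp: dmat_def\<close>)
  finally show "(dmat n f * A) $$ (i,j) = mat n m (\<lambda>(i,j). f i * A $$ (i,j)) $$ (i,j)"
    using ij by (simp add: dmat_def)
qed (use assms in \<open>auto simp: dmat_def\<close>)

lemma dmat_right: assumes "A \<in> carrier_mat n m"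
  shows "A * dmat m f = mat n m (\<lambda>(i,j). A $$ (i,j) * f j)"
proof (rule eq_matI)
  fix i j assume "i < dim_row (mat n m (\<lambda>(i,j). A $$ (i,j) * f j))" "j < dim_col (mat n m (\<lambda>(i,j). A $$ (i,j) * f j))"
  then have ij: "i < n" "j < m" by auto
  have "(A * dmat m f) $$ (i,j) = (\<Sum>k<m. A $$ (i,k) * dmat m f $$ (k,j))"
    using ij assms mult_entry[of i A j "dmat m f"] by (simp add: dmat_def)
  also have "\<dots> = A $$ (i,j) * dmat m f $$ (j,j)"
    by (rule sum_single) (use ij in \<open>auto simp: dmat_def\<close>)
  finally show "(A * dmat m f) $$ (i,j) = mat n m (\<lambda>(i,j). A $$ (i,j) * f j) $$ (i,j)"
    using ij by (simp add: dmat_def)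
qed (use assms in \<open>auto simp: dmat_def\<close>)

lemma gr0_comm:
  assumes "gr d1 d2 0 A" "A \<in> carrier_mat n m"
  shows "dmat n (\<lambda>i. f (d1 i)) * A = A * dmat m (\<lambda>j. f (d2 j) :: 'a::comm_semiring_1)"
  unfolding dmat_left[OF assms(2)] dmat_right[OF assms(2)]
proof (rule eq_matI)
  fix i j assume "i < dim_row (mat n m (\<lambda>(i, j). A $$ (i, j) * f (d2 j)))" "j < dim_col (mat n m (\<lambda>(i, j). A $$ (i, j) * f (d2 j)))"
  then have ij: "i < n" "j < m" by auto
  show "mat n m (\<lambda>(i, j). f (d1 i) * A $$ (i, j)) $$ (i, j) = mat n m (\<lambda>(i, j). A $$ (i, j) * f (d2 j)) $$ (i, j)"
    using assms ij unfolding gr_def by (cases "A $$ (i,j) = 0") (auto simp: mult.commute)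
qed auto

lemma gr_inv:
  assumes "gr d1 d2 0 Q" "Q \<in> carrier_mat n n" "Qi \<in> carrier_mat n n" "Q * Qi = 1\<^sub>m n" "Qi * Q = 1\<^sub>m n"
  shows "gr d2 d1 0 (Qi :: 'a::field_char_0 mat)"
proof -
  define T1 where "T1 = dmat n (\<lambda>i. of_nat (d1 i) :: 'a)"
  define T2 where "T2 = dmat n (\<lambda>i. of_nat (d2 i) :: 'a)"
  have c: "T1 \<in> carrier_mat n n" "T2 \<in> carrier_mat n n" by (auto simp: T1_def T2_def dmat_def)
  have e: "T1 * Q = Q * T2" unfolding T1_def T2_def by (rule gr0_comm[OF assms(1,2)])
  have a: "\<And>A B C. A \<in> carrier_mat n n \<Longrightarrow> B \<in> carrier_mat n n \<Longrightarrow> C \<in> carrier_mat n n \<Longrightarrow> A * B * C = A * (B * (C::'a mat))"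
    by (rule assoc_mult_mat)
  have "Qi * T1 = (Qi * T1) * (Q * Qi)" using assms c by simp
  also have "\<dots> = ((Qi * T1) * Q) * Qi" using assms(2,3) c by (simp only: a mult_carrier_mat)
  also have "(Qi * T1) * Q = Qi * (T1 * Q)" using assms(2,3) c by (simp only: a)
  also have "\<dots> = (Qi * Q) * T2" using assms(2,3) c e by (simp only: a)
  also have "(Qi * Q) * T2 * Qi = T2 * Qi" using assms c by simp
  finally have e2: "Qi * T1 = T2 * Qi" .
  show ?thesis unfolding gr_def
  proof (intro allI impI)
    fix i j assume i: "i < dim_row Qi" and j: "j < dim_col Qi" and nz: "Qi $$ (i,j) \<noteq> 0"
    have "(Qi * T1) $$ (i,j) = (T2 * Qi) $$ (i,j)" using e2 by simp
    then have "Qi $$ (i,j) * of_nat (d1 j) = of_nat (d2 i) * Qi $$ (i,j)"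
      using i j assms(3) unfolding T1_def T2_def dmat_left[OF assms(3)] dmat_right[OF assms(3)] by simp
    then have "(of_nat (d1 j) :: 'a) = of_nat (d2 i)" using nz by (simp add: mult.commute)
    then show "d2 i = d1 j + 0" by simp
  qed
qed


definition shm :: "nat \<Rightarrow> 'a::{zero,one} mat" where
  "shm t = mat t t (\<lambda>(i,j). if i = j + 1 then 1 else 0)"

lemma shm_carrier[simp]: "shm t \<in> carrier_mat t t" "dim_row (shm t) = t" "dim_col (shm t) = t"
  by (auto simp: shm_def)

lemma assoc': "dim_col A = dim_row B \<Longrightarrow> dim_col B = dim_row C \<Longrightarrow> A * B * C = A * (B * (C :: 'a::semiring_0 mat))"
  by (metis assoc_mult_mat carrier_mat_triv)

lemma fb_triv: "A \<in> carrier_mat nr nc \<Longrightarrow> B \<in> carrier_mat nr 0 \<Longrightarrow> C \<in> carrier_mat 0 nc \<Longrightarrow> D \<in> carrier_mat 0 0 \<Longrightarrow> four_block_mat A B C D = A"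
  by (rule eq_matI) auto

lemma gr_minus: assumes "gr d1 d2 k A" "gr d1 d2 k B" "A \<in> carrier_mat nr nc" "B \<in> carrier_mat nr nc"
  shows "gr d1 d2 k (A - B :: 'a::ab_group_add mat)"
  unfolding gr_def
proof (intro allI impI)
  fix i j assume i: "i < dim_row (A - B)" and j: "j < dim_col (A - B)" and nz: "(A - B) $$ (i,j) \<noteq> 0"
  have ij: "i < nr" "j < nc" using i j assms(4) by auto
  have "A $$ (i,j) - B $$ (i,j) \<noteq> 0" using nz ij assms(4) by simp
  then have "A $$ (i,j) \<noteq> 0 \<or> B $$ (i,j) \<noteq> 0" by auto
  then show "d1 i = d2 j + k" using assms(1,2) ij assms(3,4) unfolding gr_def by auto
qed

lemma gr_zero: "gr d1 d2 k (0\<^sub>m a b)"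
  unfolding gr_def by auto

lemma gr_fb:
  assumes "gr r1 c1 k A" "gr r1 c2 k B" "gr r2 c1 k C" "gr r2 c2 k D"
   "A \<in> carrier_mat nr1 nc1" "B \<in> carrier_mat nr1 nc2" "C \<in> carrier_mat nr2 nc1" "D \<in> carrier_mat nr2 nc2"
   "\<And>i. i < nr1 \<Longrightarrow> r i = r1 i" "\<And>i. nr1 \<le> i \<Longrightarrow> r i = r2 (i - nr1)"
   "\<And>i. i < nc1 \<Longrightarrow> c i = c1 i" "\<And>i. nc1 \<le> i \<Longrightarrow> c i = c2 (i - nc1)"
  shows "gr r c k (four_block_mat A B C D)"
  unfolding gr_def
proof (intro allI impI)
  fix i j assume i: "i < dim_row (four_block_mat A B C D)" and j: "j < dim_col (four_block_mat A B C D)"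
    and nz: "four_block_mat A B C D $$ (i, j) \<noteq> 0"
  have i': "i < nr1 + nr2" and j': "j < nc1 + nc2" using i j assms(5-8) by auto
  have dA: "dim_row A = nr1" "dim_col A = nc1" using assms(5) by auto
  have dD: "dim_row D = nr2" "dim_col D = nc2" using assms(8) by auto
  have e: "four_block_mat A B C D $$ (i, j) = (if i < nr1 then
      if j < nc1 then A $$ (i,j) else B $$ (i,j - nc1)
      else if j < nc1 then C $$ (i - nr1, j) else D $$ (i - nr1, j - nc1))"
    using index_mat_four_block(1)[of i A D j B C] i' j' dA dD by simp
  show "r i = c j + k"
  proof (cases "i < nr1")
    case True
    note ii = this
    show ?thesis
    proof (cases "j < nc1")
      case True
      then have "A $$ (i,j) \<noteq> 0" using nz e ii by simp
      then have "r1 i = c1 j + k" using assms(1,5) ii True unfolding gr_def by auto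
      then show ?thesis using assms(9,11) ii True by simp
    next
      case False
      then have "B $$ (i,j - nc1) \<noteq> 0" using nz e ii by simp
      then have "r1 i = c2 (j - nc1) + k" using assms(2,6) ii False j' unfolding gr_def by auto
      then show ?thesis using assms(9,12) ii False by simp
    qed
  next
    case False
    note ii = this
    show ?thesis
    proof (cases "j < nc1")
      case True
      then have "C $$ (i - nr1,j) \<noteq> 0" using nz e ii by simp
      then have "r2 (i - nr1) = c1 j + k" using assms(3,7) ii True i' unfolding gr_def by auto
      then show ?thesis using assms(10,11) ii True by simp
    next
      case False
      then have "D $$ (i - nr1,j - nc1) \<noteq> 0" using nz e ii by simp
      then have "r2 (i - nr1) = c2 (j - nc1) + k" using assms(4,8) ii False i' j' unfolding gr_def by auto
      then show ?thesis using assms(10,12) ii False by simp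
    qed
  qed
qed

lemma minus_zero_mat': "A \<in> carrier_mat nr nc \<Longrightarrow> A - 0\<^sub>m nr nc = (A::'a::group_add mat)"
  by (rule eq_matI) auto

lemma split_string:
  fixes X :: "'a::field_char_0 mat"
  assumes X: "X \<in> carrier_mat n n" and g: "gr d d 1 X" and t: "1 \<le> t"
    and nil: "X ^\<^sub>m t = 0\<^sub>m n n" and j0: "j0 < n" and r: "r < n" "(X ^\<^sub>m (t-1)) $$ (r, j0) \<noteq> 0"
  shows "\<exists>XC dC P Pi. t \<le> n \<and> XC \<in> carrier_mat (n-t) (n-t) \<and> gr dC dC 1 XC \<and>
     P \<in> carrier_mat n n \<and> Pi \<in> carrier_mat n n \<and> P * Pi = 1\<^sub>m n \<and> Pi * P = 1\<^sub>m n \<and>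
     P * X = four_block_mat (shm t) (0\<^sub>m t (n-t)) (0\<^sub>m (n-t) t) XC * P \<and>
     gr (\<lambda>i. if i < t then d j0 + i else dC (i - t)) d 0 P"
proof -
  have gp: "gr d d k (X ^\<^sub>m k)" for k by (rule gr_pow[OF g X])
  have pdeg: "d i = d j + k" if "(X ^\<^sub>m k) $$ (i,j) \<noteq> 0" "i < n" "j < n" for i j k
    using gp[of k] that X unfolding gr_def by auto
  have pz: "X ^\<^sub>m k = 0\<^sub>m n n" if "t \<le> k" for k
  proof -
    have "X ^\<^sub>m k = X ^\<^sub>m t * X ^\<^sub>m (k - t)" using pow_mat_add[OF X, of t "k-t"] that by simp
    then show ?thesis using nil X by simp
  qed
  have pent: "(X ^\<^sub>m (a+b)) $$ (i,j) = (\<Sum>k<n. (X ^\<^sub>m a) $$ (i,k) * (X ^\<^sub>m b) $$ (k,j))"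
    if "i<n" "j<n" for a b i j
  proof -
    have "(X ^\<^sub>m (a+b)) $$ (i,j) = (X ^\<^sub>m a * X ^\<^sub>m b) $$ (i,j)" using pow_mat_add[OF X] by simp
    also have "\<dots> = (\<Sum>k<n. (X ^\<^sub>m a) $$ (i,k) * (X ^\<^sub>m b) $$ (k,j))"
      using mult_entry[of i "X ^\<^sub>m a" j "X ^\<^sub>m b"] X that by simp
    finally show ?thesis .
  qed
  have p1: "X ^\<^sub>m (Suc 0) = X" using X by simp
  define nrm where "nrm = (X ^\<^sub>m (t-1)) $$ (r, j0)"
  have nrm: "nrm \<noteq> 0" using r nrm_def by simp
  have dr: "d r = d j0 + (t-1)" using pdeg r j0 by simp
  have wnz: "\<exists>i<n. (X ^\<^sub>m c) $$ (i, j0) \<noteq> 0" if "c < t" for c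
  proof (rule ccontr)
    assume "\<not> ?thesis" then have z: "\<forall>i<n. (X ^\<^sub>m c) $$ (i,j0) = 0" by auto
    have "nrm = (X ^\<^sub>m ((t-1-c) + c)) $$ (r, j0)" using that nrm_def by simp
    also have "\<dots> = (\<Sum>k<n. (X ^\<^sub>m (t-1-c)) $$ (r,k) * (X ^\<^sub>m c)$$(k,j0))" using pent r j0 by simp
    also have "\<dots> = 0" using z by simp
    finally show False using nrm by simp
  qed
  define rr where "rr c = (SOME i. i < n \<and> (X ^\<^sub>m c) $$ (i, j0) \<noteq> 0)" for c
  have rr: "rr c < n \<and> (X ^\<^sub>m c) $$ (rr c, j0) \<noteq> 0" if "c < t" for c
    using someI_ex[OF wnz[OF that]] unfolding rr_def by blast
  have drr: "d (rr c) = d j0 + c" if "c<t" for c using pdeg rr[OF that] j0 by blast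
  define R where "R = rr ` {..<t}"
  have injr: "inj_on rr {..<t}" unfolding inj_on_def using drr by (metis lessThan_iff add_left_cancel)
  have cardR: "card R = t" using card_image[OF injr] R_def by simp
  have Rsub: "R \<subseteq> {..<n}" using rr R_def by auto
  have tn: "t \<le> n" using card_mono[OF _ Rsub] cardR by simp
  define K where "K = {..<n} - R"
  define ks where "ks = sorted_list_of_set K"
  have finK: "finite K" unfolding K_def by simp
  have cardK: "card K = n - t" unfolding K_def using card_Diff_subset[OF _ Rsub] cardR
    by (metis card_lessThan finite_subset finite_lessThan Rsub)
  have ksl: "length ks = n - t" unfolding ks_def using cardK finK by simp
  have ksd: "distinct ks" unfolding ks_def by simp
  have kss: "set ks = K" unfolding ks_def using finK by simp
  have ksn: "ks ! j < n" "ks ! j \<notin> R" if "j < n - t" for j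
    using nth_mem[of j ks] that ksl kss K_def by auto
  have ksinj: "i = j" if "ks ! i = ks ! j" "i < n-t" "j < n-t" for i j
    using nth_eq_iff_index_eq[OF ksd, of i j] that ksl by simp
  define W where "W = mat n t (\<lambda>(i,c). (X ^\<^sub>m c) $$ (i, j0))"
  define Phi where "Phi = mat t n (\<lambda>(c,k). (X ^\<^sub>m (t-1-c)) $$ (r, k) / nrm)"
  define Lam where "Lam = mat t n (\<lambda>(c,k). if k = rr c then 1 / (X ^\<^sub>m c) $$ (rr c, j0) else 0)"
  define E where "E = mat n (n-t) (\<lambda>(k,j). if k = ks ! j then 1 else (0::'a))"
  define S where "S = (shm t :: 'a mat)"
  have cW: "W \<in> carrier_mat n t" and cPhi: "Phi \<in> carrier_mat t n" and cLam: "Lam \<in> carrier_mat t n"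
    and cE: "E \<in> carrier_mat n (n-t)" and cS: "S \<in> carrier_mat t t"
    by (auto simp: W_def Phi_def Lam_def E_def S_def)
  have F1: "Phi * W = 1\<^sub>m t"
  proof (rule eq_matI)
    fix c c' assume "c < dim_row (1\<^sub>m t :: 'a mat)" "c' < dim_col (1\<^sub>m t :: 'a mat)"
    then have cc: "c < t" "c' < t" by auto
    have "(Phi * W) $$ (c,c') = (\<Sum>k<n. Phi $$ (c,k) * W $$ (k,c'))"
      using mult_entry[of c Phi c' W] cc cW cPhi by simp
    also have "\<dots> = (\<Sum>k<n. (X ^\<^sub>m (t-1-c)) $$ (r,k) * (X ^\<^sub>m c') $$ (k,j0)) / nrm"
      unfolding sum_divide_distrib by (rule sum.cong) (auto simp: Phi_def W_def cc)
    also have "\<dots> = (X ^\<^sub>m (t-1-c+c')) $$ (r,j0) / nrm" using pent r j0 by simp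
    also have "\<dots> = (if c = c' then 1 else 0)"
    proof (cases "c < c'")
      case True
      then show ?thesis using pz[of "t-1-c+c'"] r j0 cc by simp
    next
      case False
      show ?thesis
      proof (cases "c = c'")
        case True
        then show ?thesis using nrm nrm_def cc by simp
      next
        case False
        with \<open>\<not> c < c'\<close> have "c' < c" by simp
        have "(X ^\<^sub>m (t-1-c+c')) $$ (r,j0) = 0"
        proof (rule ccontr)
          assume "(X ^\<^sub>m (t-1-c+c')) $$ (r,j0) \<noteq> 0"
          then have "d r = d j0 + (t-1-c+c')" using pdeg r j0 by blast
          then show False using dr \<open>c' < c\<close> cc by simp
        qed
        then show ?thesis using False by simp
      qed
    qed
    finally show "(Phi * W) $$ (c,c') = 1\<^sub>m t $$ (c,c')" using cc by simp
  qed (use cPhi cW in auto)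
  have F2: "Lam * W = 1\<^sub>m t"
  proof (rule eq_matI)
    fix c c' assume "c < dim_row (1\<^sub>m t :: 'a mat)" "c' < dim_col (1\<^sub>m t :: 'a mat)"
    then have cc: "c < t" "c' < t" by auto
    have "(Lam * W) $$ (c,c') = (\<Sum>k<n. Lam $$ (c,k) * W $$ (k,c'))"
      using mult_entry[of c Lam c' W] cc cW cLam by simp
    also have "\<dots> = Lam $$ (c, rr c) * W $$ (rr c, c')"
      by (rule sum_single) (use rr[OF cc(1)] cc in \<open>auto simp: Lam_def\<close>)
    also have "\<dots> = (X ^\<^sub>m c') $$ (rr c, j0) / (X ^\<^sub>m c) $$ (rr c, j0)"
      using rr[OF cc(1)] cc by (simp add: Lam_def W_def)
    also have "\<dots> = (if c = c' then 1 else 0)"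
    proof (cases "c = c'")
      case True then show ?thesis using rr[OF cc(1)] by simp
    next
      case False
      have "(X ^\<^sub>m c') $$ (rr c, j0) = 0"
      proof (rule ccontr)
        assume "(X ^\<^sub>m c') $$ (rr c, j0) \<noteq> 0"
        then have "d (rr c) = d j0 + c'" using pdeg rr[OF cc(1)] j0 by blast
        then show False using drr[OF cc(1)] False by simp
      qed
      then show ?thesis using False by simp
    qed
    finally show "(Lam * W) $$ (c,c') = 1\<^sub>m t $$ (c,c')" using cc by simp
  qed (use cLam cW in auto)
  have F3: "Lam * E = 0\<^sub>m t (n-t)"
  proof (rule eq_matI)
    fix c j assume "c < dim_row (0\<^sub>m t (n-t) :: 'a mat)" "j < dim_col (0\<^sub>m t (n-t) :: 'a mat)"
    then have cc: "c < t" "j < n - t" by auto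
    have "(Lam * E) $$ (c,j) = (\<Sum>k<n. Lam $$ (c,k) * E $$ (k,j))"
      using mult_entry[of c Lam j E] cc cE cLam by simp
    also have "\<dots> = 0"
    proof (rule sum.neutral, intro ballI)
      fix k assume k: "k \<in> {..<n}"
      have "rr c \<in> R" using cc R_def by auto
      then show "Lam $$ (c,k) * E $$ (k,j) = 0" using k cc ksn[OF cc(2)] by (auto simp: Lam_def E_def)
    qed
    finally show "(Lam * E) $$ (c,j) = 0\<^sub>m t (n-t) $$ (c,j)" using cc by simp
  qed (use cLam cE in auto)
  have F4: "transpose_mat E * E = 1\<^sub>m (n-t)"
  proof (rule eq_matI)
    fix i j assume "i < dim_row (1\<^sub>m (n-t) :: 'a mat)" "j < dim_col (1\<^sub>m (n-t) :: 'a mat)"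
    then have ij: "i < n-t" "j < n-t" by auto
    have "(transpose_mat E * E) $$ (i,j) = (\<Sum>k<n. transpose_mat E $$ (i,k) * E $$ (k,j))"
      using mult_entry[of i "transpose_mat E" j E] ij cE by simp
    also have "\<dots> = transpose_mat E $$ (i,ks!i) * E $$ (ks!i,j)"
      by (rule sum_single) (use ij ksn cE in \<open>auto simp: E_def\<close>)
    also have "\<dots> = (if i = j then 1 else 0)" using ij ksn cE ksinj by (auto simp: E_def)
    finally show "(transpose_mat E * E) $$ (i,j) = 1\<^sub>m (n-t) $$ (i,j)" using ij by simp
  qed (use cE in auto)
  have F5: "X * W = W * S"
  proof (rule eq_matI)
    fix i c assume "i < dim_row (W * S)" "c < dim_col (W * S)"
    then have ic: "i < n" "c < t" using cW cS by auto
    have "(X * W) $$ (i,c) = (\<Sum>k<n. X $$ (i,k) * W $$ (k,c))"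
      using mult_entry[of i X c W] ic cW X by simp
    also have "\<dots> = (\<Sum>k<n. (X ^\<^sub>m (Suc 0)) $$ (i,k) * (X ^\<^sub>m c) $$ (k,j0))"
      by (rule sum.cong) (auto simp: W_def ic p1)
    also have "\<dots> = (X ^\<^sub>m (Suc c)) $$ (i,j0)" using pent[of i j0 "Suc 0" c] ic j0 by simp
    also have "\<dots> = (W * S) $$ (i,c)"
    proof (cases "Suc c < t")
      case True
      have "(W * S) $$ (i,c) = (\<Sum>k<t. W $$ (i,k) * S $$ (k,c))"
        using mult_entry[of i W c S] ic cW cS by simp
      also have "\<dots> = W $$ (i, Suc c) * S $$ (Suc c, c)"
        by (rule sum_single) (use ic True in \<open>auto simp: S_def shm_def\<close>)
      also have "\<dots> = (X ^\<^sub>m (Suc c)) $$ (i,j0)" using ic True by (simp add: W_def S_def shm_def)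
      finally show ?thesis by simp
    next
      case False
      have "(W * S) $$ (i,c) = (\<Sum>k<t. W $$ (i,k) * S $$ (k,c))"
        using mult_entry[of i W c S] ic cW cS by simp
      also have "\<dots> = 0"
        by (rule sum.neutral) (use ic False in \<open>auto simp: S_def shm_def\<close>)
      also have "\<dots> = (X ^\<^sub>m (Suc c)) $$ (i,j0)" using pz[of "Suc c"] False ic j0 by simp
      finally show ?thesis by simp
    qed
    finally show "(X * W) $$ (i,c) = (W * S) $$ (i,c)" .
  qed (use X cW cS in auto)
  have F6: "Phi * X = S * Phi"
  proof (rule eq_matI)
    fix c k assume "c < dim_row (S * Phi)" "k < dim_col (S * Phi)"
    then have ck: "c < t" "k < n" using cPhi cS by auto
    have "(Phi * X) $$ (c,k) = (\<Sum>k'<n. Phi $$ (c,k') * X $$ (k',k))"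
      using mult_entry[of c Phi k X] ck cPhi X by simp
    also have "\<dots> = (\<Sum>k'<n. (X ^\<^sub>m (t-1-c)) $$ (r,k') * (X ^\<^sub>m (Suc 0)) $$ (k',k)) / nrm"
      unfolding sum_divide_distrib by (rule sum.cong) (auto simp: Phi_def ck p1)
    also have "\<dots> = (X ^\<^sub>m (t-1-c + Suc 0)) $$ (r,k) / nrm" using pent[of r k "t-1-c" "Suc 0"] ck r by simp
    also have "\<dots> = (S * Phi) $$ (c,k)"
    proof (cases "c = 0")
      case False
      have "(S * Phi) $$ (c,k) = (\<Sum>c'<t. S $$ (c,c') * Phi $$ (c',k))"
        using mult_entry[of c S k Phi] ck cPhi cS by simp
      also have "\<dots> = S $$ (c, c - 1) * Phi $$ (c - 1,k)"
        by (rule sum_single) (use ck False in \<open>auto simp: S_def shm_def\<close>)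
      also have "\<dots> = (X ^\<^sub>m (t-1-(c-1))) $$ (r,k) / nrm" using ck False by (simp add: Phi_def S_def shm_def)
      finally have sp: "(S * Phi) $$ (c,k) = (X ^\<^sub>m (t-1-(c-1))) $$ (r,k) / nrm" .
      have e: "t-1-c + Suc 0 = t-1-(c-1)" using ck False by simp
      show ?thesis unfolding e by (rule sp[symmetric])
    next
      case True
      have "(S * Phi) $$ (c,k) = (\<Sum>c'<t. S $$ (c,c') * Phi $$ (c',k))"
        using mult_entry[of c S k Phi] ck cPhi cS by simp
      also have "\<dots> = 0"
        by (rule sum.neutral) (use ck True in \<open>auto simp: S_def shm_def\<close>)
      finally show ?thesis using pz[of "t-1-c + Suc 0"] True ck r t by simp
    qed
    finally show "(Phi * X) $$ (c,k) = (S * Phi) $$ (c,k)" .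
  qed (use X cPhi cS in auto)
  define Aw where "Aw = W * Phi"
  define Bw where "Bw = W * Lam"
  define Pm where "Pm = 1\<^sub>m n - Aw"
  define Psi where "Psi = transpose_mat E * (1\<^sub>m n - Bw)"
  define XC where "XC = Psi * (X * (Pm * E))"
  have cAw: "Aw \<in> carrier_mat n n" and cBw: "Bw \<in> carrier_mat n n" and cPm: "Pm \<in> carrier_mat n n"
    and cPsi: "Psi \<in> carrier_mat (n-t) n" and cXC: "XC \<in> carrier_mat (n-t) (n-t)"
    and cET: "transpose_mat E \<in> carrier_mat (n-t) n" and c1B: "1\<^sub>m n - Bw \<in> carrier_mat n n"
    and cPmE: "Pm * E \<in> carrier_mat n (n-t)"
    using cW cPhi cLam cE X by (auto simp: Aw_def Bw_def Pm_def Psi_def XC_def)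
  note cs = cW cPhi cLam cE cS X cAw cBw cPm cPsi cXC cET c1B cPmE
  have dims: "dim_row W = n" "dim_col W = t" "dim_row Phi = t" "dim_col Phi = n"
    "dim_row Lam = t" "dim_col Lam = n" "dim_row E = n" "dim_col E = n - t" "dim_row S = t" "dim_col S = t"
    "dim_row X = n" "dim_col X = n" "dim_row Aw = n" "dim_col Aw = n" "dim_row Bw = n" "dim_col Bw = n"
    "dim_row Pm = n" "dim_col Pm = n" "dim_row Psi = n - t" "dim_col Psi = n"
    "dim_row XC = n - t" "dim_col XC = n - t"
    using cs by auto
  have G1: "Phi * Pm = 0\<^sub>m t n"
  proof -
    have "Phi * Pm = Phi * 1\<^sub>m n - Phi * Aw" unfolding Pm_def
      by (rule mult_minus_distrib_mat[OF cPhi _ cAw]) simp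
    also have "Phi * Aw = (Phi * W) * Phi" unfolding Aw_def by (rule assoc'[symmetric]) (simp_all add: dims)
    also have "\<dots> = Phi" using F1 cPhi by simp
    finally show ?thesis using cPhi by simp
  qed
  have Z: "(1\<^sub>m n - Bw) * W = 0\<^sub>m n t"
  proof -
    have "(1\<^sub>m n - Bw) * W = 1\<^sub>m n * W - Bw * W"
      by (rule minus_mult_distrib_mat[OF _ cBw cW]) simp
    also have "Bw * W = W * (Lam * W)" unfolding Bw_def by (rule assoc') (simp_all add: dims)
    also have "\<dots> = W" using F2 cW by simp
    finally show ?thesis using cW by simp
  qed
  have G2: "Psi * W = 0\<^sub>m (n-t) t"
  proof -
    have "Psi * W = transpose_mat E * ((1\<^sub>m n - Bw) * W)" unfolding Psi_def
      by (rule assoc') (use cs in simp_all)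
    then show ?thesis using Z cE by simp
  qed
  have H1: "(1\<^sub>m n - Bw) * Pm = 1\<^sub>m n - Bw"
  proof -
    have "(1\<^sub>m n - Bw) * Pm = (1\<^sub>m n - Bw) * 1\<^sub>m n - (1\<^sub>m n - Bw) * Aw" unfolding Pm_def
      by (rule mult_minus_distrib_mat[OF c1B _ cAw]) simp
    also have "(1\<^sub>m n - Bw) * Aw = ((1\<^sub>m n - Bw) * W) * Phi" unfolding Aw_def
      by (rule assoc'[symmetric]) (use cs in simp_all)
    also have "\<dots> = 0\<^sub>m n n" using Z cPhi by simp
    finally have "(1\<^sub>m n - Bw) * Pm = (1\<^sub>m n - Bw) - 0\<^sub>m n n" using right_mult_one_mat[OF c1B] by simp
    also have "\<dots> = 1\<^sub>m n - Bw" by (rule minus_zero_mat'[OF c1B])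
    finally show ?thesis .
  qed
  have G3: "Psi * (Pm * E) = 1\<^sub>m (n-t)"
  proof -
    have "Psi * (Pm * E) = transpose_mat E * ((1\<^sub>m n - Bw) * (Pm * E))" unfolding Psi_def
      by (rule assoc') (use cs in simp_all)
    also have "(1\<^sub>m n - Bw) * (Pm * E) = ((1\<^sub>m n - Bw) * Pm) * E"
      by (rule assoc'[symmetric]) (use cs in simp_all)
    also have "\<dots> = 1\<^sub>m n * E - Bw * E" unfolding H1
      by (rule minus_mult_distrib_mat[OF _ cBw cE]) simp
    also have "Bw * E = W * (Lam * E)" unfolding Bw_def by (rule assoc') (use cs in simp_all)
    also have "\<dots> = 0\<^sub>m n (n-t)" using F3 cW by simp
    finally have "Psi * (Pm * E) = transpose_mat E * (E - 0\<^sub>m n (n-t))" using cE by simp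
    also have "E - 0\<^sub>m n (n-t) = E" by (rule minus_zero_mat'[OF cE])
    finally show ?thesis using F4 by simp
  qed
  have G4: "X * Pm = Pm * X"
  proof -
    have "X * Pm = X * 1\<^sub>m n - X * Aw" unfolding Pm_def
      by (rule mult_minus_distrib_mat[OF X _ cAw]) simp
    also have "X * Aw = (X * W) * Phi" unfolding Aw_def by (rule assoc'[symmetric]) (use cs in simp_all)
    also have "\<dots> = W * (S * Phi)" unfolding F5 by (rule assoc') (use cs in simp_all)
    also have "\<dots> = (W * Phi) * X" unfolding F6[symmetric] by (rule assoc'[symmetric]) (use cs in simp_all)
    also have "X * 1\<^sub>m n = 1\<^sub>m n * X" using X by simp
    also have "1\<^sub>m n * X - (W * Phi) * X = (1\<^sub>m n - W * Phi) * X"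
      by (rule minus_mult_distrib_mat[symmetric, OF _ _ X]) (use cs in \<open>simp_all add: Aw_def[symmetric]\<close>)
    finally show ?thesis unfolding Pm_def Aw_def .
  qed
  have G5: "Psi * Pm = Psi"
  proof -
    have "Psi * Pm = Psi * 1\<^sub>m n - Psi * Aw" unfolding Pm_def
      by (rule mult_minus_distrib_mat[OF cPsi _ cAw]) simp
    also have "Psi * Aw = (Psi * W) * Phi" unfolding Aw_def by (rule assoc'[symmetric]) (use cs in simp_all)
    also have "\<dots> = 0\<^sub>m (n-t) n" using G2 cPhi by simp
    finally have "Psi * Pm = Psi - 0\<^sub>m (n-t) n" using cPsi by simp
    also have "\<dots> = Psi" by (rule minus_zero_mat'[OF cPsi])
    finally show ?thesis .
  qed
  define Q where "Q = four_block_mat W (Pm * E) (0\<^sub>m 0 t) (0\<^sub>m 0 (n-t))"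
  define Qi where "Qi = four_block_mat Phi (0\<^sub>m t 0) Psi (0\<^sub>m (n-t) 0)"
  have tn': "t + (n - t) = n" using tn by simp
  have cQ: "Q \<in> carrier_mat n n" unfolding Q_def using four_block_carrier_mat[OF cW, of "0\<^sub>m 0 (n-t)" 0 "n-t"] tn' by simp
  have cQi: "Qi \<in> carrier_mat n n" unfolding Qi_def using four_block_carrier_mat[OF cPhi, of "0\<^sub>m (n-t) 0" "n-t" 0] tn' by simp
  have QiQ: "Qi * Q = 1\<^sub>m n"
  proof -
    have "Qi * Q = four_block_mat (Phi * W + 0\<^sub>m t 0 * 0\<^sub>m 0 t) (Phi * (Pm * E) + 0\<^sub>m t 0 * 0\<^sub>m 0 (n-t))
       (Psi * W + 0\<^sub>m (n-t) 0 * 0\<^sub>m 0 t) (Psi * (Pm * E) + 0\<^sub>m (n-t) 0 * 0\<^sub>m 0 (n-t))"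
      unfolding Qi_def Q_def by (rule mult_four_block_mat) (use cs in auto)
    also have "Phi * (Pm * E) = (Phi * Pm) * E" by (rule assoc'[symmetric]) (use cs in simp_all)
    also have "\<dots> = 0\<^sub>m t (n-t)" using G1 cE by simp
    finally have "Qi * Q = four_block_mat (1\<^sub>m t) (0\<^sub>m t (n-t)) (0\<^sub>m (n-t) t) (1\<^sub>m (n-t))"
      using F1 G2 G3 by simp
    then show ?thesis using tn' by simp
  qed
  have QQi: "Q * Qi = 1\<^sub>m n" by (rule mat_mult_left_right_inverse[OF cQi cQ QiQ])
  have G6: "(Pm * E) * Psi = Pm"
  proof -
    have z1: "0\<^sub>m 0 t \<in> carrier_mat 0 t" "0\<^sub>m 0 (n-t) \<in> carrier_mat 0 (n-t)"
      "0\<^sub>m t 0 \<in> carrier_mat t 0" "0\<^sub>m (n-t) 0 \<in> carrier_mat (n-t) 0" by auto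
    have "Q * Qi = four_block_mat (W * Phi + (Pm * E) * Psi) (W * 0\<^sub>m t 0 + (Pm * E) * 0\<^sub>m (n-t) 0)
       (0\<^sub>m 0 t * Phi + 0\<^sub>m 0 (n-t) * Psi) (0\<^sub>m 0 t * 0\<^sub>m t 0 + 0\<^sub>m 0 (n-t) * 0\<^sub>m (n-t) 0)"
      unfolding Qi_def Q_def by (rule mult_four_block_mat[OF cW cPmE z1(1,2) cPhi z1(3) cPsi z1(4)])
    also have "\<dots> = W * Phi + (Pm * E) * Psi"
    proof (rule fb_triv)
      show "W * Phi + Pm * E * Psi \<in> carrier_mat n n" using cW cPhi cPmE cPsi by simp
      show "W * 0\<^sub>m t 0 + Pm * E * 0\<^sub>m (n - t) 0 \<in> carrier_mat n 0" using cW cPmE by simp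
      show "0\<^sub>m 0 t * Phi + 0\<^sub>m 0 (n - t) * Psi \<in> carrier_mat 0 n" using cPhi cPsi by simp
      show "0\<^sub>m 0 t * 0\<^sub>m t 0 + 0\<^sub>m 0 (n - t) * 0\<^sub>m (n - t) 0 \<in> carrier_mat 0 0" by simp
    qed
    finally have e: "W * Phi + (Pm * E) * Psi = 1\<^sub>m n" using QQi by simp
    show ?thesis
    proof (rule eq_matI)
      fix i j assume "i < dim_row Pm" "j < dim_col Pm"
      then have ij: "i < n" "j < n" using cPm by auto
      have "(W * Phi + (Pm * E) * Psi) $$ (i,j) = 1\<^sub>m n $$ (i,j)" using e by simp
      moreover have "(W * Phi + (Pm * E) * Psi) $$ (i,j) = (W * Phi) $$ (i,j) + ((Pm * E) * Psi) $$ (i,j)"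
        by (rule index_add_mat(1)) (use ij cPm cE cPsi in simp_all)
      ultimately have "(W * Phi) $$ (i,j) + ((Pm * E) * Psi) $$ (i,j) = 1\<^sub>m n $$ (i,j)" by simp
      moreover have "Pm $$ (i,j) = 1\<^sub>m n $$ (i,j) - (W * Phi) $$ (i,j)"
        unfolding Pm_def Aw_def by (rule index_minus_mat(1)) (use ij cW cPhi in simp_all)
      ultimately show "((Pm * E) * Psi) $$ (i,j) = Pm $$ (i,j)" by (metis add_diff_cancel_left')
    qed (use cPm cPmE cPsi in auto)
  qed
  have G7: "XC * Psi = Psi * X"
  proof -
    have "XC * Psi = Psi * ((X * (Pm * E)) * Psi)" unfolding XC_def by (rule assoc') (use cs in simp_all)
    also have "(X * (Pm * E)) * Psi = X * ((Pm * E) * Psi)" by (rule assoc') (use cs in simp_all)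
    also have "\<dots> = Pm * X" using G6 G4 by simp
    also have "Psi * (Pm * X) = (Psi * Pm) * X" by (rule assoc'[symmetric]) (use cs in simp_all)
    finally show ?thesis using G5 by simp
  qed
  define Bm where "Bm = four_block_mat S (0\<^sub>m t (n-t)) (0\<^sub>m (n-t) t) XC"
  have inter: "Qi * X = Bm * Qi"
  proof -
    have z1: "0\<^sub>m n 0 \<in> carrier_mat n 0" "0\<^sub>m 0 n \<in> carrier_mat 0 n" "0\<^sub>m 0 0 \<in> carrier_mat 0 0"
      "0\<^sub>m t 0 \<in> carrier_mat t 0" "0\<^sub>m (n-t) 0 \<in> carrier_mat (n-t) 0"
      "0\<^sub>m t (n-t) \<in> carrier_mat t (n-t)" "0\<^sub>m (n-t) t \<in> carrier_mat (n-t) t" by auto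
    have X4: "X = four_block_mat X (0\<^sub>m n 0) (0\<^sub>m 0 n) (0\<^sub>m 0 0)" by (rule fb_triv[symmetric, OF X z1(1-3)])
    have "Qi * four_block_mat X (0\<^sub>m n 0) (0\<^sub>m 0 n) (0\<^sub>m 0 0) =
      four_block_mat (Phi * X + 0\<^sub>m t 0 * 0\<^sub>m 0 n) (Phi * 0\<^sub>m n 0 + 0\<^sub>m t 0 * 0\<^sub>m 0 0)
        (Psi * X + 0\<^sub>m (n-t) 0 * 0\<^sub>m 0 n) (Psi * 0\<^sub>m n 0 + 0\<^sub>m (n-t) 0 * 0\<^sub>m 0 0)"
      unfolding Qi_def by (rule mult_four_block_mat[OF cPhi z1(4) cPsi z1(5) X z1(1-3)])
    also have "\<dots> = four_block_mat (Phi * X) (0\<^sub>m t 0) (Psi * X) (0\<^sub>m (n-t) 0)" using cPhi cPsi X by simp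
    finally have l: "Qi * X = four_block_mat (Phi * X) (0\<^sub>m t 0) (Psi * X) (0\<^sub>m (n-t) 0)" using X4 by simp
    have "Bm * Qi = four_block_mat (S * Phi + 0\<^sub>m t (n-t) * Psi) (S * 0\<^sub>m t 0 + 0\<^sub>m t (n-t) * 0\<^sub>m (n-t) 0)
        (0\<^sub>m (n-t) t * Phi + XC * Psi) (0\<^sub>m (n-t) t * 0\<^sub>m t 0 + XC * 0\<^sub>m (n-t) 0)"
      unfolding Qi_def Bm_def by (rule mult_four_block_mat[OF cS z1(6,7) cXC cPhi z1(4) cPsi z1(5)])
    also have "\<dots> = four_block_mat (S * Phi) (0\<^sub>m t 0) (XC * Psi) (0\<^sub>m (n-t) 0)" using cS cPhi cPsi cXC by simp
    finally show ?thesis using l F6 G7 by simp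
  qed
  define dW where "dW c = d j0 + c" for c
  define dC where "dC j = d (ks ! j)" for j
  define dN where "dN i = (if i < t then d j0 + i else dC (i - t))" for i
  have grW: "gr d dW 0 W" unfolding gr_def
  proof (intro allI impI)
    fix i c assume "i < dim_row W" "c < dim_col W" "W $$ (i,c) \<noteq> 0"
    then show "d i = dW c + 0" using pdeg j0 cW by (auto simp: W_def dW_def)
  qed
  have grPhi: "gr dW d 0 Phi" unfolding gr_def
  proof (intro allI impI)
    fix c k assume ck: "c < dim_row Phi" "k < dim_col Phi" and nz: "Phi $$ (c,k) \<noteq> 0"
    then have "(X ^\<^sub>m (t-1-c)) $$ (r,k) \<noteq> 0" using cPhi by (auto simp: Phi_def)
    then have "d r = d k + (t-1-c)" using pdeg r ck cPhi by auto
    then show "dW c = d k + 0" using dr ck cPhi by (auto simp: dW_def)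
  qed
  have grLam: "gr dW d 0 Lam" unfolding gr_def
  proof (intro allI impI)
    fix c k assume ck: "c < dim_row Lam" "k < dim_col Lam" and nz: "Lam $$ (c,k) \<noteq> 0"
    then have "k = rr c" "c < t" using cLam by (auto simp: Lam_def split: if_splits)
    then show "dW c = d k + 0" using drr by (simp add: dW_def)
  qed
  have grE: "gr d dC 0 E" unfolding gr_def
    by (auto simp: E_def dC_def split: if_splits)
  have grET: "gr dC d 0 (transpose_mat E)" unfolding gr_def
    by (auto simp: E_def dC_def split: if_splits)
  have grAw: "gr d d 0 Aw" using gr_mult[OF grW grPhi] cW cPhi by (simp add: Aw_def)
  have grBw: "gr d d 0 Bw" using gr_mult[OF grW grLam] cW cLam by (simp add: Bw_def)
  have grPm: "gr d d 0 Pm" unfolding Pm_def by (rule gr_minus[OF gr_one grAw _ cAw]) simp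
  have gr1B: "gr d d 0 (1\<^sub>m n - Bw)" by (rule gr_minus[OF gr_one grBw _ cBw]) simp
  have grPsi: "gr dC d 0 Psi" using gr_mult[OF grET gr1B] cE cBw by (simp add: Psi_def)
  have grPmE: "gr d dC 0 (Pm * E)" using gr_mult[OF grPm grE] cPm cE by simp
  have grXPE: "gr d dC 1 (X * (Pm * E))" using gr_mult[OF g grPmE] X cPm by simp
  have grXC: "gr dC dC 1 XC" using gr_mult[OF grPsi grXPE] cPsi X by (simp add: XC_def)
  have grQ: "gr d dN 0 Q" unfolding Q_def
    by (rule gr_fb[OF grW grPmE gr_zero[of "\<lambda>i. d (i + n)" dW 0 0 t] gr_zero[of "\<lambda>i. d (i + n)" dC 0 0 "n-t"] cW cPmE])
       (auto simp: dN_def dW_def)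
  have grQi: "gr dN d 0 Qi" by (rule gr_inv[OF grQ cQ cQi QQi QiQ])
  show ?thesis
  proof (intro exI conjI)
    show "t \<le> n" by (rule tn)
    show "XC \<in> carrier_mat (n-t) (n-t)" by (rule cXC)
    show "gr dC dC 1 XC" by (rule grXC)
    show "Qi \<in> carrier_mat n n" by (rule cQi)
    show "Q \<in> carrier_mat n n" by (rule cQ)
    show "Qi * Q = 1\<^sub>m n" by (rule QiQ)
    show "Q * Qi = 1\<^sub>m n" by (rule QQi)
    show "Qi * X = four_block_mat (shm t) (0\<^sub>m t (n - t)) (0\<^sub>m (n - t) t) XC * Qi"
      using inter by (simp add: Bm_def S_def)
    show "gr (\<lambda>i. if i < t then d j0 + i else dC (i - t)) d 0 Qi" using grQi by (simp add: dN_def[abs_def])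
  qed
qed

fun SL :: "(nat \<times> nat) list \<Rightarrow> 'a::{zero,one} mat" where
  "SL [] = 0\<^sub>m 0 0"
| "SL ((l,d) # L) = four_block_mat (shm l) (0\<^sub>m l (sum_list (map fst L))) (0\<^sub>m (sum_list (map fst L)) l) (SL L)"

fun degL :: "(nat \<times> nat) list \<Rightarrow> nat \<Rightarrow> nat" where
  "degL [] i = 0"
| "degL ((l,d) # L) i = (if i < l then d + i else degL L (i - l))"

lemma SL_carrier: "SL L \<in> carrier_mat (sum_list (map fst L)) (sum_list (map fst L))"
  by (induction L rule: SL.induct) auto

lemma decomp:
  fixes X :: "'a::field_char_0 mat"
  assumes "X \<in> carrier_mat n n" "gr d d 1 X"
  shows "\<exists>L P Pi. (\<forall>p\<in>set L. 1 \<le> fst p) \<and> sum_list (map fst L) = n \<and> P \<in> carrier_mat n n \<and>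
    Pi \<in> carrier_mat n n \<and> P * Pi = 1\<^sub>m n \<and> Pi * P = 1\<^sub>m n \<and> P * X = SL L * P \<and> gr (degL L) d 0 P"
  using assms
proof (induction n arbitrary: X d rule: less_induct)
  case (less n)
  show ?case
  proof (cases "n = 0")
    case True
    have X0: "X = 0\<^sub>m 0 0" by (rule eq_matI) (use less.prems True in auto)
    show ?thesis
    proof (intro exI conjI)
      show "\<forall>p\<in>set []. 1 \<le> fst p" by simp
      show "sum_list (map fst []) = n" using True by simp
      show "1\<^sub>m n \<in> carrier_mat n n" by simp
      show "1\<^sub>m n * 1\<^sub>m n = (1\<^sub>m n :: 'a mat)" by simp
      show "1\<^sub>m n * X = SL [] * 1\<^sub>m n" using X0 True by simp
      show "gr (degL []) d 0 (1\<^sub>m n :: 'a mat)" using True unfolding gr_def by simp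
    qed simp_all
  next
    case False
    note X = less.prems(1) and g = less.prems(2)
    define D where "D = Max (d ` {..<n})"
    have dD: "d i \<le> D" if "i < n" for i unfolding D_def using that by simp
    have nilD: "X ^\<^sub>m (Suc D) = 0\<^sub>m n n" using gr_nilp[OF g X dD, of "Suc D"] by simp
    define t where "t = (LEAST k. X ^\<^sub>m k = 0\<^sub>m n n)"
    have tz: "X ^\<^sub>m t = 0\<^sub>m n n" unfolding t_def by (rule LeastI[of _ "Suc D"]) (rule nilD)
    have t0: "t \<noteq> 0"
    proof
      assume "t = 0"
      then have "(1\<^sub>m n :: 'a mat) = 0\<^sub>m n n" using tz X by simp
      then have "(1\<^sub>m n :: 'a mat) $$ (0,0) = 0\<^sub>m n n $$ (0,0)" by simp
      then show False using False by simp
    qed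
    have tnz: "X ^\<^sub>m (t-1) \<noteq> 0\<^sub>m n n"
    proof
      assume "X ^\<^sub>m (t-1) = 0\<^sub>m n n"
      then have "t \<le> t - 1" unfolding t_def by (rule Least_le)
      then show False using t0 by simp
    qed
    obtain r j0 where rj: "r < n" "j0 < n" "(X ^\<^sub>m (t-1)) $$ (r, j0) \<noteq> 0"
    proof -
      have "\<exists>r<n. \<exists>j0<n. (X ^\<^sub>m (t-1)) $$ (r, j0) \<noteq> 0"
      proof (rule ccontr)
        assume "\<not> ?thesis"
        then have "X ^\<^sub>m (t-1) = 0\<^sub>m n n" by (intro eq_matI) (use X in auto)
        then show False using tnz by simp
      qed
      then show ?thesis using that by blast
    qed
    obtain XC dC P1 Pi1 where sp: "t \<le> n" "XC \<in> carrier_mat (n-t) (n-t)" "gr dC dC 1 XC"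
      "P1 \<in> carrier_mat n n" "Pi1 \<in> carrier_mat n n" "P1 * Pi1 = 1\<^sub>m n" "Pi1 * P1 = 1\<^sub>m n"
      "P1 * X = four_block_mat (shm t) (0\<^sub>m t (n-t)) (0\<^sub>m (n-t) t) XC * P1"
      "gr (\<lambda>i. if i < t then d j0 + i else dC (i - t)) d 0 P1"
      using split_string[OF X g _ tz rj(2) rj(1) rj(3)] t0 by auto
    have lt: "n - t < n" using t0 False by simp
    obtain L' P' Pi' where ih: "\<forall>p\<in>set L'. 1 \<le> fst p" "sum_list (map fst L') = n - t"
      "P' \<in> carrier_mat (n-t) (n-t)" "Pi' \<in> carrier_mat (n-t) (n-t)" "P' * Pi' = 1\<^sub>m (n-t)"
      "Pi' * P' = 1\<^sub>m (n-t)" "P' * XC = SL L' * P'" "gr (degL L') dC 0 P'"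
      using less.IH[OF lt sp(2,3)] by blast
    define L where "L = (t, d j0) # L'"
    define F where "F = four_block_mat (1\<^sub>m t) (0\<^sub>m t (n-t)) (0\<^sub>m (n-t) t) P'"
    define Fi where "Fi = four_block_mat (1\<^sub>m t) (0\<^sub>m t (n-t)) (0\<^sub>m (n-t) t) Pi'"
    define S where "S = (shm t :: 'a mat)"
    have tn': "t + (n - t) = n" using sp(1) by simp
    have z: "0\<^sub>m t (n-t) \<in> carrier_mat t (n-t)" "0\<^sub>m (n-t) t \<in> carrier_mat (n-t) t"
      "(1\<^sub>m t :: 'a mat) \<in> carrier_mat t t" by auto
    have cF: "F \<in> carrier_mat n n" unfolding F_def using four_block_carrier_mat[OF z(3) ih(3)] tn' by simp
    have cFi: "Fi \<in> carrier_mat n n" unfolding Fi_def using four_block_carrier_mat[OF z(3) ih(4)] tn' by simp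
    have FFi: "F * Fi = 1\<^sub>m n"
    proof -
      have "F * Fi = four_block_mat (1\<^sub>m t * 1\<^sub>m t + 0\<^sub>m t (n-t) * 0\<^sub>m (n-t) t) (1\<^sub>m t * 0\<^sub>m t (n-t) + 0\<^sub>m t (n-t) * Pi')
         (0\<^sub>m (n-t) t * 1\<^sub>m t + P' * 0\<^sub>m (n-t) t) (0\<^sub>m (n-t) t * 0\<^sub>m t (n-t) + P' * Pi')"
        unfolding F_def Fi_def by (rule mult_four_block_mat[OF z(3,1,2) ih(3) z(3,1,2) ih(4)])
      also have "\<dots> = four_block_mat (1\<^sub>m t) (0\<^sub>m t (n-t)) (0\<^sub>m (n-t) t) (1\<^sub>m (n-t))"
        using ih(3,4,5) by simp
      finally show ?thesis using tn' by simp
    qed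
    have SLL: "SL L = four_block_mat S (0\<^sub>m t (n-t)) (0\<^sub>m (n-t) t) (SL L')"
      unfolding L_def S_def using ih(2) by simp
    have cSL': "(SL L' :: 'a mat) \<in> carrier_mat (n-t) (n-t)" using SL_carrier[of L'] ih(2) by simp
    have cS: "S \<in> carrier_mat t t" unfolding S_def by simp
    have FB: "F * four_block_mat S (0\<^sub>m t (n-t)) (0\<^sub>m (n-t) t) XC = SL L * F"
    proof -
      have "F * four_block_mat S (0\<^sub>m t (n-t)) (0\<^sub>m (n-t) t) XC =
        four_block_mat (1\<^sub>m t * S + 0\<^sub>m t (n-t) * 0\<^sub>m (n-t) t) (1\<^sub>m t * 0\<^sub>m t (n-t) + 0\<^sub>m t (n-t) * XC)
         (0\<^sub>m (n-t) t * S + P' * 0\<^sub>m (n-t) t) (0\<^sub>m (n-t) t * 0\<^sub>m t (n-t) + P' * XC)"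
        unfolding F_def by (rule mult_four_block_mat[OF z(3,1,2) ih(3) cS z(1,2) sp(2)])
      also have "\<dots> = four_block_mat S (0\<^sub>m t (n-t)) (0\<^sub>m (n-t) t) (P' * XC)"
        using cS ih(3) sp(2) by simp
      also have "\<dots> = four_block_mat (S * 1\<^sub>m t + 0\<^sub>m t (n-t) * 0\<^sub>m (n-t) t) (S * 0\<^sub>m t (n-t) + 0\<^sub>m t (n-t) * P')
         (0\<^sub>m (n-t) t * 1\<^sub>m t + SL L' * 0\<^sub>m (n-t) t) (0\<^sub>m (n-t) t * 0\<^sub>m t (n-t) + SL L' * P')"
      proof (rule cong_four_block_mat)
        show "S = S * 1\<^sub>m t + 0\<^sub>m t (n - t) * 0\<^sub>m (n - t) t" using cS by simp
        show "0\<^sub>m t (n - t) = S * 0\<^sub>m t (n - t) + 0\<^sub>m t (n - t) * P'" using cS ih(3) by simp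
        show "(0\<^sub>m (n - t) t :: 'a mat) = 0\<^sub>m (n - t) t * 1\<^sub>m t + SL L' * 0\<^sub>m (n - t) t"
          using right_mult_zero_mat[OF cSL', of t] by simp
        show "P' * XC = 0\<^sub>m (n - t) t * 0\<^sub>m t (n - t) + SL L' * P'"
          using ih(7) left_add_zero_mat[OF mult_carrier_mat[OF cSL' ih(3)]] by simp
      qed
      also have "\<dots> = SL L * F"
        unfolding SLL F_def by (rule mult_four_block_mat[symmetric, OF cS z(1,2) cSL' z(3,1,2) ih(3)])
      finally show ?thesis .
    qed
    show ?thesis
    proof (intro exI conjI)
      show "\<forall>p\<in>set L. 1 \<le> fst p" using ih(1) t0 by (auto simp: L_def)
      show "sum_list (map fst L) = n" using ih(2) tn' by (simp add: L_def)
      show "F * P1 \<in> carrier_mat n n" using cF sp(4) by simp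
      show "Pi1 * Fi \<in> carrier_mat n n" using cFi sp(5) by simp
      have "F * P1 * (Pi1 * Fi) = F * (P1 * Pi1) * Fi"
        using cF cFi sp(4,5) by (simp add: assoc')
      also have "\<dots> = 1\<^sub>m n" using sp(6) cF FFi by simp
      finally show "F * P1 * (Pi1 * Fi) = 1\<^sub>m n" .
      have FiF: "Fi * F = 1\<^sub>m n" by (rule mat_mult_left_right_inverse[OF cF cFi FFi])
      have "Pi1 * Fi * (F * P1) = Pi1 * (Fi * F) * P1"
        using cF cFi sp(4,5) by (simp add: assoc')
      also have "\<dots> = 1\<^sub>m n" using sp(7) FiF sp(5) by simp
      finally show "Pi1 * Fi * (F * P1) = 1\<^sub>m n" .
      have "F * P1 * X = F * (P1 * X)" using cF sp(4) less.prems(1) by (simp add: assoc')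
      also have "\<dots> = F * (four_block_mat S (0\<^sub>m t (n-t)) (0\<^sub>m (n-t) t) XC * P1)" using sp(8) S_def by simp
      also have "\<dots> = (F * four_block_mat S (0\<^sub>m t (n-t)) (0\<^sub>m (n-t) t) XC) * P1"
        using cF sp(4) cS sp(2) tn' by (simp add: assoc')
      also have "\<dots> = SL L * (F * P1)" unfolding FB using cF sp(4) SLL cS cSL' tn' by (simp add: assoc')
      finally show "F * P1 * X = SL L * (F * P1)" .
      have grF: "gr (degL L) (\<lambda>i. if i < t then d j0 + i else dC (i - t)) 0 F"
        unfolding F_def
      proof (rule gr_fb[of "\<lambda>i. d j0 + i" "\<lambda>i. d j0 + i" 0 "1\<^sub>m t" dC "0\<^sub>m t (n-t)" "degL L'"
          "0\<^sub>m (n-t) t" P' t t "n-t" "n-t"])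
        show "gr (\<lambda>i. d j0 + i) (\<lambda>i. d j0 + i) 0 (1\<^sub>m t :: 'a mat)" unfolding gr_def by auto
      qed (use ih(8,3) in \<open>auto simp: L_def gr_zero\<close>)
      show "gr (degL L) d 0 (F * P1)" using gr_mult[OF grF sp(9)] cF sp(4) by simp
    qed
  qed
qed

fun qb :: "'a::comm_ring_1 \<Rightarrow> nat \<Rightarrow> nat \<Rightarrow> 'a" where
  "qb c 0 j = (if j = 0 then 1 else 0)"
| "qb c (Suc n) 0 = 1"
| "qb c (Suc n) (Suc j) = c ^ Suc j * qb c n (Suc j) + qb c n j"

lemma qb_0[simp]: "qb c n 0 = 1"
  by (cases n) auto

lemma qb_gt: "n < j \<Longrightarrow> qb c n j = 0"
proof (induction n arbitrary: j)
  case 0 then show ?case by simp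
next
  case (Suc n)
  then obtain j' where "j = Suc j'" by (cases j) auto
  then show ?case using Suc by simp
qed

lemma qb_diag[simp]: "qb c n n = 1"
  by (induction n) (auto simp: qb_gt)

lemma ring_aux:
  fixes P Q R K A B C :: "'a::comm_ring_1"
  assumes "P * Q = R * K"
  shows "P * (Q * A + B) + (R * C + A) = R * (K * A + C) + (P * B + A)"
proof -
  have "P * (Q * A + B) + (R * C + A) = (P * Q) * A + P * B + R * C + A" by (simp add: algebra_simps)
  also have "\<dots> = (R * K) * A + P * B + R * C + A" using assms by simp
  also have "\<dots> = R * (K * A + C) + (P * B + A)" by (simp add: algebra_simps)
  finally show ?thesis .
qed

lemma qb_sym: "k \<le> N \<Longrightarrow> qb c (Suc N) (Suc k) = c ^ (N - k) * qb c N k + qb c N (Suc k)"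
proof (induction N arbitrary: k)
  case 0 then show ?case by simp
next
  case (Suc N)
  show ?case
  proof (cases "k = Suc N")
    case True then show ?thesis by (simp add: qb_gt)
  next
    case False
    then have kN: "k \<le> N" using Suc.prems by simp
    have IHk: "qb c (Suc N) (Suc k) = c ^ (N - k) * qb c N k + qb c N (Suc k)" by (rule Suc.IH[OF kN])
    show ?thesis
    proof (cases k)
      case 0
      have d1: "qb c (Suc (Suc N)) (Suc 0) = c ^ Suc 0 * qb c (Suc N) (Suc 0) + qb c (Suc N) 0" by (rule qb.simps(3))
      have d2: "qb c (Suc N) (Suc 0) = c ^ Suc 0 * qb c N (Suc 0) + qb c N 0" by (rule qb.simps(3))
      have i0: "qb c (Suc N) (Suc 0) = c ^ N * qb c N 0 + qb c N (Suc 0)" using IHk 0 by simp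
      have "qb c (Suc (Suc N)) (Suc 0) = c ^ (Suc N) * qb c (Suc N) 0 + qb c (Suc N) (Suc 0)"
        unfolding d1 qb_0 using d2 i0 by (simp add: algebra_simps)
      then show ?thesis using 0 by simp
    next
      case (Suc k')
      note kk = this
      have k'N: "k' \<le> N" using kN kk by simp
      have IHk': "qb c (Suc N) (Suc k') = c ^ (N - k') * qb c N k' + qb c N (Suc k')" by (rule Suc.IH[OF k'N])
      have e1: "N - k' = Suc N - k" using kk kN by simp
      have a2: "Suc k + (N - k) = Suc N" "(Suc N - k) + k = Suc N" using kN by auto
      have e23: "c ^ Suc k * c ^ (N - k) = c ^ (Suc N - k) * c ^ k"
      proof -
        have "c ^ Suc k * c ^ (N - k) = c ^ (Suc k + (N - k))" by (rule power_add[symmetric])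
        also have "\<dots> = c ^ ((Suc N - k) + k)" using a2 by simp
        also have "\<dots> = c ^ (Suc N - k) * c ^ k" by (rule power_add)
        finally show ?thesis .
      qed
      have defk: "qb c (Suc N) k = c ^ k * qb c N k + qb c N k'"
        unfolding kk by (rule qb.simps(3))
      have defk1: "qb c (Suc N) (Suc k) = c ^ Suc k * qb c N (Suc k) + qb c N k" by (rule qb.simps(3))
      have e1': "Suc N - k = N - k'" using e1 by simp
      have ik': "qb c (Suc N) k = c ^ (Suc N - k) * qb c N k' + qb c N k" unfolding kk diff_Suc_Suc by (rule IHk')
      have "qb c (Suc (Suc N)) (Suc k) = c ^ Suc k * qb c (Suc N) (Suc k) + qb c (Suc N) k" by (rule qb.simps(3))
      also have "\<dots> = c ^ Suc k * (c ^ (N - k) * qb c N k + qb c N (Suc k)) + (c ^ (Suc N - k) * qb c N k' + qb c N k)"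
        unfolding ik' IHk ..
      also have "\<dots> = c ^ (Suc N - k) * (c ^ k * qb c N k + qb c N k') + (c ^ Suc k * qb c N (Suc k) + qb c N k)"
        by (rule ring_aux[OF e23])
      also have "\<dots> = c ^ (Suc N - k) * qb c (Suc N) k + qb c (Suc N) (Suc k)" unfolding defk defk1 ..
      finally show ?thesis .
    qed
  qed
qed

lemma qb_vanish:
  fixes c :: "'a::field"
  assumes cs: "c ^ s = 1" and ord: "\<And>k. 0 < k \<Longrightarrow> k < s \<Longrightarrow> c ^ k \<noteq> 1"
  shows "1 \<le> k \<Longrightarrow> k < s \<Longrightarrow> qb c s k = 0"
proof (induction k)
  case 0 then show ?case by simp
next
  case (Suc k)
  have ks: "k \<le> s" using Suc.prems by simp
  have "qb c (Suc s) (Suc k) = c ^ Suc k * qb c s (Suc k) + qb c s k" by simp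
  moreover have "qb c (Suc s) (Suc k) = c ^ (s - k) * qb c s k + qb c s (Suc k)" by (rule qb_sym[OF ks])
  ultimately have rel: "(c ^ Suc k - 1) * qb c s (Suc k) = (c ^ (s - k) - 1) * qb c s k"
    by (simp add: algebra_simps)
  have "(c ^ (s - k) - 1) * qb c s k = 0"
  proof (cases k)
    case 0 then show ?thesis using cs by simp
  next
    case (Suc k') then show ?thesis using Suc.IH Suc.prems by simp
  qed
  then have "(c ^ Suc k - 1) * qb c s (Suc k) = 0" using rel by simp
  moreover have "c ^ Suc k \<noteq> 1" by (rule ord) (use Suc.prems in auto)
  ultimately show ?case by simp
qed

lemma qb_lucas:
  fixes c :: "'a::field"
  assumes s0: "0 < s" and cs: "c ^ s = 1" and ord: "\<And>k. 0 < k \<Longrightarrow> k < s \<Longrightarrow> c ^ k \<noteq> 1"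
  shows "d \<le> s \<Longrightarrow> qb c n d = (if d < s then qb c (n mod s) d else of_nat (n div s))"
proof (induction n arbitrary: d)
  case 0 then show ?case using s0 by (auto simp: qb_gt)
next
  case (Suc n)
  show ?case
  proof (cases d)
    case 0 then show ?thesis using s0 by simp
  next
    case (Suc d')
    have d's: "d' < s" using Suc.prems Suc by simp
    have IH1: "qb c n d' = qb c (n mod s) d'" using Suc.IH[of d'] d's by simp
    have rec: "qb c (Suc n) d = c ^ d * qb c n d + qb c n d'" using Suc by simp
    show ?thesis
    proof (cases "d < s")
      case True
      have IH2: "qb c n d = qb c (n mod s) d" using Suc.IH[of d] True by simp
      show ?thesis
      proof (cases "Suc (n mod s) < s")
        case True
        have m: "Suc n mod s = Suc (n mod s)" using True by (simp add: mod_Suc)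
        have "qb c (Suc n mod s) d = c ^ d * qb c (n mod s) d + qb c (n mod s) d'" using m Suc by simp
        then show ?thesis using rec IH1 IH2 \<open>d < s\<close> by simp
      next
        case False
        then have nm: "Suc (n mod s) = s" using s0 by (meson le_neq_implies_less mod_less_divisor Suc_leI)
        have m: "Suc n mod s = 0" using nm s0 by (simp add: div_Suc mod_Suc)
        have "qb c (Suc (n mod s)) d = c ^ d * qb c (n mod s) d + qb c (n mod s) d'" using Suc by simp
        then have "qb c s d = c ^ d * qb c (n mod s) d + qb c (n mod s) d'" unfolding nm .
        moreover have "qb c s d = 0" using qb_vanish[OF cs ord, of d] Suc \<open>d < s\<close> by simp
        ultimately show ?thesis using rec IH1 IH2 m \<open>d < s\<close> Suc by simp
      qed
    next
      case False
      then have ds: "d = s" using Suc.prems by simp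
      have IH2: "qb c n d = of_nat (n div s)" using Suc.IH[of d] ds by simp
      have cd: "c ^ d = 1" using cs ds by simp
      show ?thesis
      proof (cases "Suc (n mod s) < s")
        case True
        have m4: "Suc n mod s = Suc (n mod s)" using True by (simp add: mod_Suc)
        have "Suc n div s = n div s" using m4 by (simp add: div_Suc)
        moreover have "qb c (n mod s) d' = 0" using qb_gt[of "n mod s" d'] True ds Suc by simp
        ultimately show ?thesis using rec IH1 IH2 cd ds by simp
      next
        case False
        then have nm: "Suc (n mod s) = s" using s0 by (meson le_neq_implies_less mod_less_divisor Suc_leI)
        have "Suc n div s = Suc (n div s)" using nm s0 by (simp add: div_Suc mod_Suc)
        moreover have "qb c (n mod s) d' = 1" using nm ds Suc by (metis Suc_inject qb_diag)
        ultimately show ?thesis using rec IH1 IH2 cd ds by simp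
      qed
    qed
  qed
qed

lemma qb_mult:
  fixes c :: "'a::field"
  assumes s0: "0 < s" and cs: "c ^ s = 1" and ord: "\<And>k. 0 < k \<Longrightarrow> k < s \<Longrightarrow> c ^ k \<noteq> 1"
  shows "qb c (a * s) s = of_nat a"
  using qb_lucas[OF s0 cs ord, of s "a * s"] s0 by simp

lemma kron_dims[simp]: "dim_row (kron A B) = dim_row A * dim_row B" "dim_col (kron A B) = dim_col A * dim_col B"
  by (auto simp: kron_def)

lemma kron_index: "i < dim_row A * dim_row B \<Longrightarrow> j < dim_col A * dim_col B \<Longrightarrow>
  kron A B $$ (i,j) = A $$ (i div dim_row B, j div dim_col B) * B $$ (i mod dim_row B, j mod dim_col B)"
  by (simp add: kron_def)

lemma gr_add: assumes "gr d1 d2 k A" "gr d1 d2 k B" "A \<in> carrier_mat nr nc" "B \<in> carrier_mat nr nc"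
  shows "gr d1 d2 k (A + B :: 'a::monoid_add mat)"
  unfolding gr_def
proof (intro allI impI)
  fix i j assume i: "i < dim_row (A + B)" and j: "j < dim_col (A + B)" and nz: "(A + B) $$ (i,j) \<noteq> 0"
  have ij: "i < nr" "j < nc" using i j assms(4) by auto
  have "A $$ (i,j) + B $$ (i,j) \<noteq> 0" using nz ij assms(4) by simp
  then have "A $$ (i,j) \<noteq> 0 \<or> B $$ (i,j) \<noteq> 0" by auto
  then show "d1 i = d2 j + k" using assms(1,2) ij assms(3,4) unfolding gr_def by auto
qed

lemma div_mod_eq_iff: "(i::nat) = j \<longleftrightarrow> i div b = j div b \<and> i mod b = j mod b"
  by (metis div_mult_mod_eq)

fun degm :: "nat \<Rightarrow> nat \<Rightarrow> nat \<Rightarrow> nat" where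
  "degm s 0 i = 0"
| "degm s (Suc m) i = degm s m (i div (s+1)) + i mod (s+1)"

lemma Vmod_snd: "snd (Vmod \<chi> t \<mu>) = shm t"
  by (simp add: Vmod_def shm_def)

lemma Vmod_fst: "fst (Vmod \<chi> t \<mu>) g = dmat t (\<lambda>i. \<chi> g ^ i * \<mu> g)"
  by (simp add: Vmod_def dmat_def)

lemma kron_dmat:
  assumes "0 < n2"
  shows "kron (dmat n1 f1) (dmat n2 f2) = dmat (n1 * n2) (\<lambda>i. f1 (i div n2) * (f2 (i mod n2) :: 'a::field))"
proof (rule eq_matI)
  fix i j assume "i < dim_row (dmat (n1 * n2) (\<lambda>i. f1 (i div n2) * f2 (i mod n2)))"
    "j < dim_col (dmat (n1 * n2) (\<lambda>i. f1 (i div n2) * f2 (i mod n2)))"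
  then have ij: "i < n1 * n2" "j < n1 * n2" by (auto simp: dmat_def)
  have d: "i div n2 < n1" "j div n2 < n1" using ij by (auto simp: less_mult_imp_div_less)
  have m: "i mod n2 < n2" "j mod n2 < n2" using assms by auto
  show "kron (dmat n1 f1) (dmat n2 f2) $$ (i, j) = dmat (n1 * n2) (\<lambda>i. f1 (i div n2) * f2 (i mod n2)) $$ (i, j)"
    using ij d m kron_index[of i "dmat n1 f1" "dmat n2 f2" j] div_mod_eq_iff[of i j n2]
    by (auto simp: dmat_def)
qed (auto simp: dmat_def)

lemma sum_split: "(\<Sum>q<a*b. f q) = (\<Sum>k1<a. \<Sum>k2<(b::nat). (f (k1*b + k2) :: 'a::comm_monoid_add))"
proof (induction a)
  case 0 then show ?case by simp
next
  case (Suc a)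
  have u: "{..<Suc a * b} = {..<a*b} \<union> (\<lambda>k2. a*b + k2) ` {..<b}"
  proof
    show "{..<Suc a * b} \<subseteq> {..<a*b} \<union> (\<lambda>k2. a*b + k2) ` {..<b}"
    proof
      fix x assume "x \<in> {..<Suc a * b}"
      then have "x < a*b + b" by simp
      show "x \<in> {..<a*b} \<union> (\<lambda>k2. a*b + k2) ` {..<b}"
      proof (cases "x < a*b")
        case True then show ?thesis by simp
      next
        case False
        then have "x = a*b + (x - a*b)" "x - a*b < b" using \<open>x < a*b + b\<close> by auto
        then show ?thesis by blast
      qed
    qed
  qed auto
  have "(\<Sum>q<Suc a * b. f q) = (\<Sum>q<a*b. f q) + (\<Sum>q\<in>(\<lambda>k2. a*b + k2) ` {..<b}. f q)"
    unfolding u by (rule sum.union_disjoint) auto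
  also have "(\<Sum>q\<in>(\<lambda>k2. a*b + k2) ` {..<b}. f q) = (\<Sum>k2<b. f (a*b + k2))"
    by (subst sum.reindex) (auto simp: inj_on_def)
  finally show ?case using Suc by (simp add: mult.commute)
qed

lemma dm_lemma: "(j::nat) < b \<Longrightarrow> (i*b + j) div b = i" "(j::nat) < b \<Longrightarrow> (i*b + j) mod b = j"
  by simp_all

lemma idx_lt: "(i1::nat) < N \<Longrightarrow> j \<le> s \<Longrightarrow> i1*(s+1)+j < N*(s+1)"
proof -
  assume a: "i1 < N" "j \<le> s"
  have "i1*(s+1)+j < (i1+1)*(s+1)" using a by simp
  also have "\<dots> \<le> N*(s+1)" using a by (intro mult_le_mono1) simp
  finally show ?thesis .
qed

lemma tens_pow:
  fixes X X' :: "'k::field mat" and c :: 'k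
  assumes X: "X \<in> carrier_mat N N" and N0: "0 < N" and X': "X' \<in> carrier_mat (N*(s+1)) (N*(s+1))"
  and ent: "\<And>i1 j k1 k2. i1 < N \<Longrightarrow> j \<le> s \<Longrightarrow> k1 < N \<Longrightarrow> k2 \<le> s \<Longrightarrow>
     X' $$ (i1*(s+1)+j, k1*(s+1)+k2) = X $$ (i1,k1) * (if j = k2 then c^j else 0) + (if i1 = k1 \<and> j = k2 + 1 then 1 else 0)"
  shows "i1 < N \<Longrightarrow> j \<le> s \<Longrightarrow> (X' ^\<^sub>m n) $$ (i1*(s+1)+j, 0) = qb c n j * (X ^\<^sub>m (n - j)) $$ (i1, 0)"
proof (induction n arbitrary: i1 j)
  case 0
  have idx: "i1*(s+1)+j < N*(s+1)" using 0 by (rule idx_lt)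
  have "(X' ^\<^sub>m 0) $$ (i1*(s+1)+j, 0) = (if i1*(s+1)+j = 0 then 1 else 0)" using X' idx N0 by simp
  also have "\<dots> = qb c 0 j * (X ^\<^sub>m (0 - j)) $$ (i1, 0)" using X 0 N0 by auto
  finally show ?case .
next
  case (Suc n)
  have idx: "i1*(s+1)+j < N*(s+1)" using Suc.prems by (rule idx_lt)
  let ?T1 = "\<lambda>k1 k2. X $$ (i1,k1) * (if j = k2 then c^j else 0) * (qb c n k2 * (X ^\<^sub>m (n - k2)) $$ (k1, 0))"
  let ?T2 = "\<lambda>k1 k2. (if i1 = k1 \<and> j = k2 + 1 then 1 else 0) * (qb c n k2 * (X ^\<^sub>m (n - k2)) $$ (k1, 0))"
  have "(X' ^\<^sub>m Suc n) $$ (i1*(s+1)+j, 0) = (X' * X' ^\<^sub>m n) $$ (i1*(s+1)+j, 0)"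
    using pow_mat_Suc_left[OF X'] by simp
  also have "\<dots> = (\<Sum>q<N*(s+1). X' $$ (i1*(s+1)+j, q) * (X' ^\<^sub>m n) $$ (q, 0))"
    using mult_entry[of "i1*(s+1)+j" X' 0 "X' ^\<^sub>m n"] idx X' N0 by simp
  also have "\<dots> = (\<Sum>k1<N. \<Sum>k2<s+1. X' $$ (i1*(s+1)+j, k1*(s+1)+k2) * (X' ^\<^sub>m n) $$ (k1*(s+1)+k2, 0))"
    by (rule sum_split)
  also have "\<dots> = (\<Sum>k1<N. \<Sum>k2<s+1. ?T1 k1 k2 + ?T2 k1 k2)"
  proof (intro sum.cong refl)
    fix k1 k2 assume k: "k1 \<in> {..<N}" "k2 \<in> {..<s+1}"
    then have "X' $$ (i1*(s+1)+j, k1*(s+1)+k2) = X $$ (i1,k1) * (if j = k2 then c^j else 0) + (if i1 = k1 \<and> j = k2 + 1 then 1 else 0)"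
      using ent Suc.prems by simp
    moreover have "(X' ^\<^sub>m n) $$ (k1*(s+1)+k2, 0) = qb c n k2 * (X ^\<^sub>m (n - k2)) $$ (k1, 0)"
      using Suc.IH[of k1 k2] k by simp
    ultimately show "X' $$ (i1*(s+1)+j, k1*(s+1)+k2) * (X' ^\<^sub>m n) $$ (k1*(s+1)+k2, 0) = ?T1 k1 k2 + ?T2 k1 k2"
      by (simp add: algebra_simps)
  qed
  also have "\<dots> = (\<Sum>k1<N. \<Sum>k2<s+1. ?T1 k1 k2) + (\<Sum>k1<N. \<Sum>k2<s+1. ?T2 k1 k2)"
    by (simp add: sum.distrib)
  also have "(\<Sum>k1<N. \<Sum>k2<s+1. ?T1 k1 k2) = c^j * qb c n j * (X ^\<^sub>m (Suc (n - j))) $$ (i1, 0)"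
  proof -
    have "(\<Sum>k1<N. \<Sum>k2<s+1. ?T1 k1 k2) = (\<Sum>k1<N. ?T1 k1 j)"
    proof (rule sum.cong[OF refl])
      fix k1 assume "k1 \<in> {..<N}"
      show "(\<Sum>k2<s+1. ?T1 k1 k2) = ?T1 k1 j" by (rule sum_single) (use Suc.prems in auto)
    qed
    also have "\<dots> = c^j * qb c n j * (\<Sum>k1<N. X $$ (i1,k1) * (X ^\<^sub>m (n - j)) $$ (k1, 0))"
      by (simp add: sum_distrib_left algebra_simps)
    also have "(\<Sum>k1<N. X $$ (i1,k1) * (X ^\<^sub>m (n - j)) $$ (k1, 0)) = (X * X ^\<^sub>m (n - j)) $$ (i1, 0)"
      using mult_entry[of i1 X 0 "X ^\<^sub>m (n - j)"] X Suc.prems N0 by simp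
    also have "\<dots> = (X ^\<^sub>m (Suc (n - j))) $$ (i1, 0)" using pow_mat_Suc_left[OF X] by simp
    finally show ?thesis .
  qed
  also have "(\<Sum>k1<N. \<Sum>k2<s+1. ?T2 k1 k2) = (if 1 \<le> j then qb c n (j - 1) * (X ^\<^sub>m (n - (j - 1))) $$ (i1, 0) else 0)"
  proof (cases "1 \<le> j")
    case True
    have "(\<Sum>k1<N. \<Sum>k2<s+1. ?T2 k1 k2) = (\<Sum>k1<N. ?T2 k1 (j - 1))"
    proof (rule sum.cong[OF refl])
      fix k1 assume "k1 \<in> {..<N}"
      show "(\<Sum>k2<s+1. ?T2 k1 k2) = ?T2 k1 (j - 1)" by (rule sum_single) (use Suc.prems True in auto)
    qed
    also have "\<dots> = ?T2 i1 (j - 1)" by (rule sum_single) (use Suc.prems True in auto)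
    finally show ?thesis using True by simp
  next
    case False
    then show ?thesis by simp
  qed
  also have "c^j * qb c n j * (X ^\<^sub>m (Suc (n - j))) $$ (i1, 0) +
      (if 1 \<le> j then qb c n (j - 1) * (X ^\<^sub>m (n - (j - 1))) $$ (i1, 0) else 0)
      = qb c (Suc n) j * (X ^\<^sub>m (Suc n - j)) $$ (i1, 0)"
  proof (cases j)
    case 0 then show ?thesis by simp
  next
    case (Suc j')
    show ?thesis
    proof (cases "j \<le> n")
      case True
      then have "Suc (n - j) = Suc n - j" "n - (j - 1) = Suc n - j" using Suc by auto
      then show ?thesis using Suc by (simp add: algebra_simps)
    next
      case False
      then have "qb c n j = 0" by (simp add: qb_gt)
      moreover have "n - (j - 1) = Suc n - j" using Suc by simp
      ultimately show ?thesis using Suc by simp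
    qed
  qed
  finally show ?case .
qed

lemma degm_le: "i < (s+1)^m \<Longrightarrow> degm s m i \<le> m * s"
proof (induction m arbitrary: i)
  case 0 then show ?case by simp
next
  case (Suc m)
  have "i div (s+1) < (s+1)^m" using Suc.prems by (simp add: less_mult_imp_div_less mult.commute)
  then have A: "degm s m (i div (s+1)) \<le> m * s" by (rule Suc.IH)
  have B: "i mod (s+1) \<le> s" by (simp add: less_Suc_eq_le)
  have "degm s m (i div (s+1)) + i mod (s+1) \<le> m * s + s" by (rule add_mono[OF A B])
  then show ?case by simp
qed

lemma degm_zero: "i < (s+1)^m \<Longrightarrow> degm s m i = 0 \<Longrightarrow> i = 0"
proof (induction m arbitrary: i)
  case 0 then show ?case by simp
next
  case (Suc m)
  have "i div (s+1) < (s+1)^m" using Suc.prems by (simp add: less_mult_imp_div_less mult.commute)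
  moreover have "degm s m (i div (s+1)) = 0" "i mod (s+1) = 0" using Suc.prems by auto
  ultimately have "i div (s+1) = 0" using Suc.IH by blast
  then show ?case using \<open>i mod (s+1) = 0\<close> by (metis div_mult_mod_eq mult_zero_left add_0)
qed

lemma degm_0: "degm s m 0 = 0"
  by (induction m) auto

lemma pos_in_list: "(l,e) \<in> set L \<Longrightarrow> \<exists>off. off + l \<le> sum_list (map fst L) \<and> (\<forall>i<l. degL L (off+i) = e + i)"
proof (induction L)
  case Nil then show ?case by simp
next
  case (Cons p L)
  obtain l' d where p: "p = (l',d)" by (cases p)
  show ?case
  proof (cases "(l,e) = (l',d)")
    case True
    then show ?thesis using p by (intro exI[of _ 0]) auto
  next
    case False
    then have "(l,e) \<in> set L" using Cons.prems p by auto
    then obtain off where "off + l \<le> sum_list (map fst L)" "\<forall>i<l. degL L (off+i) = e + i"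
      using Cons.IH by blast
    then show ?thesis using p by (intro exI[of _ "l' + off"]) auto
  qed
qed

lemma decomp_first:
  fixes X :: "'a::field_char_0 mat"
  assumes X: "X \<in> carrier_mat n n" and g: "gr d d 1 X" and t0: "1 \<le> t" and tz: "X ^\<^sub>m t = 0\<^sub>m n n"
    and rj: "r < n" "j0 < n" "(X ^\<^sub>m (t-1)) $$ (r, j0) \<noteq> 0"
  shows "\<exists>L' P Pi. (\<forall>p\<in>set L'. 1 \<le> fst p) \<and> sum_list (map fst L') + t = n \<and> P \<in> carrier_mat n n \<and>
    Pi \<in> carrier_mat n n \<and> P * Pi = 1\<^sub>m n \<and> Pi * P = 1\<^sub>m n \<and> P * X = SL ((t, d j0) # L') * P \<and>
    gr (degL ((t, d j0) # L')) d 0 P"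
proof -
  obtain XC dC P1 Pi1 where sp: "t \<le> n" "XC \<in> carrier_mat (n-t) (n-t)" "gr dC dC 1 XC"
    "P1 \<in> carrier_mat n n" "Pi1 \<in> carrier_mat n n" "P1 * Pi1 = 1\<^sub>m n" "Pi1 * P1 = 1\<^sub>m n"
    "P1 * X = four_block_mat (shm t) (0\<^sub>m t (n-t)) (0\<^sub>m (n-t) t) XC * P1"
    "gr (\<lambda>i. if i < t then d j0 + i else dC (i - t)) d 0 P1"
    using split_string[OF X g t0 tz rj(2) rj(1) rj(3)] by blast
  obtain L' P' Pi' where ih: "\<forall>p\<in>set L'. 1 \<le> fst p" "sum_list (map fst L') = n - t"
    "P' \<in> carrier_mat (n-t) (n-t)" "Pi' \<in> carrier_mat (n-t) (n-t)" "P' * Pi' = 1\<^sub>m (n-t)"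
    "Pi' * P' = 1\<^sub>m (n-t)" "P' * XC = SL L' * P'" "gr (degL L') dC 0 P'"
    using decomp[OF sp(2,3)] by blast
  define L where "L = (t, d j0) # L'"
  define F where "F = four_block_mat (1\<^sub>m t) (0\<^sub>m t (n-t)) (0\<^sub>m (n-t) t) P'"
  define Fi where "Fi = four_block_mat (1\<^sub>m t) (0\<^sub>m t (n-t)) (0\<^sub>m (n-t) t) Pi'"
  define S where "S = (shm t :: 'a mat)"
  have tn': "t + (n - t) = n" using sp(1) by simp
  have z: "0\<^sub>m t (n-t) \<in> carrier_mat t (n-t)" "0\<^sub>m (n-t) t \<in> carrier_mat (n-t) t"
    "(1\<^sub>m t :: 'a mat) \<in> carrier_mat t t" by auto
  have cF: "F \<in> carrier_mat n n" unfolding F_def using four_block_carrier_mat[OF z(3) ih(3)] tn' by simp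
  have cFi: "Fi \<in> carrier_mat n n" unfolding Fi_def using four_block_carrier_mat[OF z(3) ih(4)] tn' by simp
  have FFi: "F * Fi = 1\<^sub>m n"
  proof -
    have "F * Fi = four_block_mat (1\<^sub>m t * 1\<^sub>m t + 0\<^sub>m t (n-t) * 0\<^sub>m (n-t) t) (1\<^sub>m t * 0\<^sub>m t (n-t) + 0\<^sub>m t (n-t) * Pi')
       (0\<^sub>m (n-t) t * 1\<^sub>m t + P' * 0\<^sub>m (n-t) t) (0\<^sub>m (n-t) t * 0\<^sub>m t (n-t) + P' * Pi')"
      unfolding F_def Fi_def by (rule mult_four_block_mat[OF z(3,1,2) ih(3) z(3,1,2) ih(4)])
    also have "\<dots> = four_block_mat (1\<^sub>m t) (0\<^sub>m t (n-t)) (0\<^sub>m (n-t) t) (1\<^sub>m (n-t))"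
      using ih(3,4,5) by simp
    finally show ?thesis using tn' by simp
  qed
  have SLL: "SL L = four_block_mat S (0\<^sub>m t (n-t)) (0\<^sub>m (n-t) t) (SL L')"
    unfolding L_def S_def using ih(2) by simp
  have cSL': "(SL L' :: 'a mat) \<in> carrier_mat (n-t) (n-t)" using SL_carrier[of L'] ih(2) by simp
  have cS: "S \<in> carrier_mat t t" unfolding S_def by simp
  have FB: "F * four_block_mat S (0\<^sub>m t (n-t)) (0\<^sub>m (n-t) t) XC = SL L * F"
  proof -
    have "F * four_block_mat S (0\<^sub>m t (n-t)) (0\<^sub>m (n-t) t) XC =
      four_block_mat (1\<^sub>m t * S + 0\<^sub>m t (n-t) * 0\<^sub>m (n-t) t) (1\<^sub>m t * 0\<^sub>m t (n-t) + 0\<^sub>m t (n-t) * XC)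
       (0\<^sub>m (n-t) t * S + P' * 0\<^sub>m (n-t) t) (0\<^sub>m (n-t) t * 0\<^sub>m t (n-t) + P' * XC)"
      unfolding F_def by (rule mult_four_block_mat[OF z(3,1,2) ih(3) cS z(1,2) sp(2)])
    also have "\<dots> = four_block_mat S (0\<^sub>m t (n-t)) (0\<^sub>m (n-t) t) (P' * XC)"
      using cS ih(3) sp(2) by simp
    also have "\<dots> = four_block_mat (S * 1\<^sub>m t + 0\<^sub>m t (n-t) * 0\<^sub>m (n-t) t) (S * 0\<^sub>m t (n-t) + 0\<^sub>m t (n-t) * P')
       (0\<^sub>m (n-t) t * 1\<^sub>m t + SL L' * 0\<^sub>m (n-t) t) (0\<^sub>m (n-t) t * 0\<^sub>m t (n-t) + SL L' * P')"
    proof (rule cong_four_block_mat)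
      show "S = S * 1\<^sub>m t + 0\<^sub>m t (n - t) * 0\<^sub>m (n - t) t" using cS by simp
      show "0\<^sub>m t (n - t) = S * 0\<^sub>m t (n - t) + 0\<^sub>m t (n - t) * P'" using cS ih(3) by simp
      show "(0\<^sub>m (n - t) t :: 'a mat) = 0\<^sub>m (n - t) t * 1\<^sub>m t + SL L' * 0\<^sub>m (n - t) t"
        using right_mult_zero_mat[OF cSL', of t] by simp
      show "P' * XC = 0\<^sub>m (n - t) t * 0\<^sub>m t (n - t) + SL L' * P'"
        using ih(7) left_add_zero_mat[OF mult_carrier_mat[OF cSL' ih(3)]] by simp
    qed
    also have "\<dots> = SL L * F"
      unfolding SLL F_def by (rule mult_four_block_mat[symmetric, OF cS z(1,2) cSL' z(3,1,2) ih(3)])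
    finally show ?thesis .
  qed
  show ?thesis
  proof (rule exI[of _ L'], rule exI[of _ "F * P1"], rule exI[of _ "Pi1 * Fi"], intro conjI)
    show "\<forall>p\<in>set L'. 1 \<le> fst p" using ih(1) by auto
    show "sum_list (map fst L') + t = n" using ih(2) tn' by simp
    show "F * P1 \<in> carrier_mat n n" using cF sp(4) by simp
    show "Pi1 * Fi \<in> carrier_mat n n" using cFi sp(5) by simp
    have "F * P1 * (Pi1 * Fi) = F * (P1 * Pi1) * Fi"
      using cF cFi sp(4,5) by (simp add: assoc')
    also have "\<dots> = 1\<^sub>m n" using sp(6) cF FFi by simp
    finally show "F * P1 * (Pi1 * Fi) = 1\<^sub>m n" .
    have FiF: "Fi * F = 1\<^sub>m n" by (rule mat_mult_left_right_inverse[OF cF cFi FFi])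
    have "Pi1 * Fi * (F * P1) = Pi1 * (Fi * F) * P1"
      using cF cFi sp(4,5) by (simp add: assoc')
    also have "\<dots> = 1\<^sub>m n" using sp(7) FiF sp(5) by simp
    finally show "Pi1 * Fi * (F * P1) = 1\<^sub>m n" .
    have "F * P1 * X = F * (P1 * X)" using cF sp(4) X by (simp add: assoc')
    also have "\<dots> = F * (four_block_mat S (0\<^sub>m t (n-t)) (0\<^sub>m (n-t) t) XC * P1)" using sp(8) S_def by simp
    also have "\<dots> = (F * four_block_mat S (0\<^sub>m t (n-t)) (0\<^sub>m (n-t) t) XC) * P1"
      using cF sp(4) cS sp(2) tn' by (simp add: assoc')
    also have "\<dots> = SL L * (F * P1)" unfolding FB using cF sp(4) SLL cS cSL' tn' by (simp add: assoc')
    finally have "F * P1 * X = SL L * (F * P1)" .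
    then show "F * P1 * X = SL ((t, d j0) # L') * (F * P1)" by (simp only: L_def)
    have grF: "gr (degL L) (\<lambda>i. if i < t then d j0 + i else dC (i - t)) 0 F"
      unfolding F_def
    proof (rule gr_fb[of "\<lambda>i. d j0 + i" "\<lambda>i. d j0 + i" 0 "1\<^sub>m t" dC "0\<^sub>m t (n-t)" "degL L'"
        "0\<^sub>m (n-t) t" P' t t "n-t" "n-t"])
      show "gr (\<lambda>i. d j0 + i) (\<lambda>i. d j0 + i) 0 (1\<^sub>m t :: 'a mat)" unfolding gr_def by auto
    qed (use ih(8,3) in \<open>auto simp: L_def gr_zero\<close>)
    have "gr (degL L) d 0 (F * P1)" using gr_mult[OF grF sp(9)] cF sp(4) by simp
    then show "gr (degL ((t, d j0) # L')) d 0 (F * P1)" by (simp only: L_def)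
  qed
qed

context
  fixes \<chi> :: "'g \<Rightarrow> 'k::field_char_0" and a :: 'g and s :: nat
begin

abbreviation "VV \<equiv> Vmod \<chi> (s+1) eps_char"

lemma htpow_rep:
  "fst (htpow \<chi> a VV m) = (\<lambda>g. dmat ((s+1)^m) (\<lambda>i. \<chi> g ^ degm s m i)) \<and>
   snd (htpow \<chi> a VV m) \<in> carrier_mat ((s+1)^m) ((s+1)^m) \<and>
   gr (degm s m) (degm s m) 1 (snd (htpow \<chi> a VV m))"
proof (induction m)
  case 0
  have "fst (htpow \<chi> a VV 0) = (\<lambda>g. dmat 1 (\<lambda>i. \<chi> g ^ degm s 0 i))"
  proof
    fix g
    show "fst (htpow \<chi> a VV 0) g = dmat 1 (\<lambda>i. \<chi> g ^ degm s 0 i)"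
      unfolding htpow.simps Vmod_fst by (rule eq_matI) (auto simp: dmat_def eps_char_def)
  qed
  moreover have "snd (htpow \<chi> a VV 0) \<in> carrier_mat 1 1" by (simp add: Vmod_snd)
  moreover have "gr (degm s 0) (degm s 0) 1 (snd (htpow \<chi> a VV 0))"
    by (simp add: Vmod_snd gr_def shm_def)
  ultimately show ?case by (simp only: power_0)
next
  case (Suc m)
  define M where "M = htpow \<chi> a VV m"
  define X where "X = snd M"
  have fM: "fst M = (\<lambda>g. dmat ((s+1)^m) (\<lambda>i. \<chi> g ^ degm s m i))" and cX: "X \<in> carrier_mat ((s+1)^m) ((s+1)^m)"
    and gX: "gr (degm s m) (degm s m) 1 X" using Suc by (auto simp: M_def X_def)
  have hM: "hdim M = (s+1)^m" using cX by (simp add: hdim_def X_def)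
  have N: "(s+1)^Suc m = (s+1)^m * (s+1)" by simp
  have eq: "htpow \<chi> a VV (Suc m) = htensor a M VV" by (simp add: M_def)
  have f: "fst (htpow \<chi> a VV (Suc m)) = (\<lambda>g. dmat ((s+1)^Suc m) (\<lambda>i. \<chi> g ^ degm s (Suc m) i))"
  proof
    fix g
    have "fst (htpow \<chi> a VV (Suc m)) g = kron (fst M g) (fst VV g)" by (simp add: M_def htensor_def)
    also have "\<dots> = kron (dmat ((s+1)^m) (\<lambda>i. \<chi> g ^ degm s m i)) (dmat (s+1) (\<lambda>i. \<chi> g ^ i * eps_char g))"
      by (simp add: fM Vmod_fst)
    also have "\<dots> = dmat ((s+1)^m * (s+1)) (\<lambda>i. \<chi> g ^ degm s m (i div (s+1)) * (\<chi> g ^ (i mod (s+1)) * eps_char g))"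
      by (rule kron_dmat) simp
    also have "\<dots> = dmat ((s+1)^Suc m) (\<lambda>i. \<chi> g ^ degm s (Suc m) i)"
      unfolding N by (simp add: eps_char_def power_add)
    finally show "fst (htpow \<chi> a VV (Suc m)) g = dmat ((s+1)^Suc m) (\<lambda>i. \<chi> g ^ degm s (Suc m) i)" .
  qed
  define D where "D = fst VV a"
  have sn: "snd (htpow \<chi> a VV (Suc m)) = kron X D + kron (1\<^sub>m ((s+1)^m)) (shm (s+1))"
    unfolding eq htensor_def X_def D_def hM Vmod_snd by simp
  have cD: "D \<in> carrier_mat (s+1) (s+1)" by (simp add: D_def Vmod_fst dmat_def)
  have c1: "kron X D \<in> carrier_mat ((s+1)^Suc m) ((s+1)^Suc m)"
    by (rule carrier_matI) (use carrier_matD[OF cX] carrier_matD[OF cD] N in simp_all)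
  have c2: "kron (1\<^sub>m ((s+1)^m)) (shm (s+1)) \<in> carrier_mat ((s+1)^Suc m) ((s+1)^Suc m)"
    by (rule carrier_matI) (use N in simp_all)
  have g1: "gr (degm s (Suc m)) (degm s (Suc m)) 1 (kron X D)"
    unfolding gr_def
  proof (intro allI impI)
    fix i j assume i: "i < dim_row (kron X D)" and j: "j < dim_col (kron X D)" and nz: "kron X D $$ (i,j) \<noteq> 0"
    have e: "kron X D $$ (i,j) = X $$ (i div (s+1), j div (s+1)) * D $$ (i mod (s+1), j mod (s+1))"
      using kron_index[of i X D j] i j cX cD by simp
    have d: "i div (s+1) < (s+1)^m" "j div (s+1) < (s+1)^m" using i j cX cD
      by (auto simp: less_mult_imp_div_less)
    have "X $$ (i div (s+1), j div (s+1)) \<noteq> 0" "D $$ (i mod (s+1), j mod (s+1)) \<noteq> 0" using nz e by auto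
    then have "degm s m (i div (s+1)) = degm s m (j div (s+1)) + 1" "i mod (s+1) = j mod (s+1)"
      using gX d cX unfolding gr_def by (auto simp: D_def Vmod_fst dmat_def split: if_splits)
    then show "degm s (Suc m) i = degm s (Suc m) j + 1" by simp
  qed
  have g2: "gr (degm s (Suc m)) (degm s (Suc m)) 1 (kron (1\<^sub>m ((s+1)^m)) (shm (s+1)) :: 'k mat)"
    unfolding gr_def
  proof (intro allI impI)
    fix i j assume i: "i < dim_row (kron (1\<^sub>m ((s+1)^m)) (shm (s+1)) :: 'k mat)"
      and j: "j < dim_col (kron (1\<^sub>m ((s+1)^m)) (shm (s+1)) :: 'k mat)"
      and nz: "(kron (1\<^sub>m ((s+1)^m)) (shm (s+1)) :: 'k mat) $$ (i,j) \<noteq> 0"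
    have e: "(kron (1\<^sub>m ((s+1)^m)) (shm (s+1)) :: 'k mat) $$ (i,j) = (1\<^sub>m ((s+1)^m) :: 'k mat) $$ (i div (s+1), j div (s+1)) * (shm (s+1) :: 'k mat) $$ (i mod (s+1), j mod (s+1))"
      using kron_index[of i "1\<^sub>m ((s+1)^m) :: 'k mat" "shm (s+1)" j] i j by simp
    have d: "i div (s+1) < (s+1)^m" "j div (s+1) < (s+1)^m" using i j
      by (auto simp: less_mult_imp_div_less)
    have "(1\<^sub>m ((s+1)^m) :: 'k mat) $$ (i div (s+1), j div (s+1)) \<noteq> 0" "(shm (s+1) :: 'k mat) $$ (i mod (s+1), j mod (s+1)) \<noteq> 0"
      using nz e by auto
    then have "i div (s+1) = j div (s+1)" "i mod (s+1) = j mod (s+1) + 1"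
      using d by (auto simp: shm_def split: if_splits)
    then show "degm s (Suc m) i = degm s (Suc m) j + 1" by simp
  qed
  show ?case
  proof (intro conjI)
    show "fst (htpow \<chi> a VV (Suc m)) = (\<lambda>g. dmat ((s+1)^Suc m) (\<lambda>i. \<chi> g ^ degm s (Suc m) i))" by (rule f)
    show "snd (htpow \<chi> a VV (Suc m)) \<in> carrier_mat ((s+1)^Suc m) ((s+1)^Suc m)" unfolding sn
      by (rule add_carrier_mat[OF c2])
    show "gr (degm s (Suc m)) (degm s (Suc m)) 1 (snd (htpow \<chi> a VV (Suc m)))" unfolding sn
      by (rule gr_add[OF g1 g2 c1 c2])
  qed
qed

lemma htpow_snd_Suc: "snd (htpow \<chi> a VV (Suc m)) = kron (snd (htpow \<chi> a VV m)) (fst VV a) + kron (1\<^sub>m ((s+1)^m)) (shm (s+1))"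
proof -
  have "snd (htpow \<chi> a VV m) \<in> carrier_mat ((s+1)^m) ((s+1)^m)" using htpow_rep[of m] by blast
  then have "hdim (htpow \<chi> a VV m) = (s+1)^m" unfolding hdim_def by (rule carrier_matD)
  then show ?thesis by (simp add: htensor_def Vmod_snd)
qed

lemma top_nz:
  assumes cs: "\<chi> a ^ s = 1" and ord: "\<And>k. 0 < k \<Longrightarrow> k < s \<Longrightarrow> \<chi> a ^ k \<noteq> 1" and s0: "0 < s"
  shows "(snd (htpow \<chi> a VV m) ^\<^sub>m (m*s)) $$ ((s+1)^m - 1, 0) \<noteq> 0"
proof (induction m)
  case 0
  have "snd (htpow \<chi> a VV 0) \<in> carrier_mat 1 1" by (simp add: Vmod_snd)
  then show ?case by simp
next
  case (Suc m)
  define X where "X = snd (htpow \<chi> a VV m)"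
  define X' where "X' = snd (htpow \<chi> a VV (Suc m))"
  define N where "N = (s+1)^m"
  have N0: "0 < N" unfolding N_def by simp
  have cX: "X \<in> carrier_mat N N" using htpow_rep[of m] by (simp add: X_def N_def)
  have NS: "(s+1)^Suc m = N * (s+1)" unfolding N_def by simp
  have cX': "X' \<in> carrier_mat (N*(s+1)) (N*(s+1))" using htpow_rep[of "Suc m"] NS by (simp add: X'_def)
  have ent: "X' $$ (i1*(s+1)+j, k1*(s+1)+k2) = X $$ (i1,k1) * (if j = k2 then (\<chi> a)^j else 0) + (if i1 = k1 \<and> j = k2 + 1 then 1 else 0)"
    if "i1 < N" "j \<le> s" "k1 < N" "k2 \<le> s" for i1 j k1 k2
  proof -
    have ij: "i1*(s+1)+j < N*(s+1)" "k1*(s+1)+k2 < N*(s+1)" using idx_lt[OF that(1,2)] idx_lt[OF that(3,4)] by auto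
    have dmi: "(i1*(s+1)+j) div (s+1) = i1" "(i1*(s+1)+j) mod (s+1) = j"
      "(k1*(s+1)+k2) div (s+1) = k1" "(k1*(s+1)+k2) mod (s+1) = k2"
      using dm_lemma[of j "s+1" i1] dm_lemma[of k2 "s+1" k1] that by auto
    have dD: "dim_row (fst VV a) = s+1" "dim_col (fst VV a) = s+1" by (simp_all add: Vmod_fst dmat_def)
    have dX: "dim_row X = N" "dim_col X = N" using cX by auto
    have e0: "X' = kron X (fst VV a) + kron (1\<^sub>m N) (shm (s+1))"
      unfolding X'_def htpow_snd_Suc X_def N_def ..
    have e1: "X' $$ (i1*(s+1)+j, k1*(s+1)+k2) = kron X (fst VV a) $$ (i1*(s+1)+j, k1*(s+1)+k2) +
       (kron (1\<^sub>m N) (shm (s+1)) :: 'k mat) $$ (i1*(s+1)+j, k1*(s+1)+k2)"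
      unfolding e0 by (rule index_add_mat(1)) (use ij in simp_all)
    have e2: "kron X (fst VV a) $$ (i1*(s+1)+j, k1*(s+1)+k2) = X $$ (i1,k1) * fst VV a $$ (j,k2)"
      using kron_index[of "i1*(s+1)+j" X "fst VV a" "k1*(s+1)+k2"] ij dX dD dmi by simp
    have e3: "(kron (1\<^sub>m N) (shm (s+1)) :: 'k mat) $$ (i1*(s+1)+j, k1*(s+1)+k2) = (1\<^sub>m N :: 'k mat) $$ (i1,k1) * (shm (s+1) :: 'k mat) $$ (j,k2)"
      using kron_index[of "i1*(s+1)+j" "1\<^sub>m N :: 'k mat" "shm (s+1)" "k1*(s+1)+k2"] ij dmi by simp
    have e4: "fst VV a $$ (j,k2) = (if j = k2 then (\<chi> a)^j else 0)" using that by (simp add: Vmod_fst dmat_def eps_char_def)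
    have e5: "(1\<^sub>m N :: 'k mat) $$ (i1,k1) * (shm (s+1) :: 'k mat) $$ (j,k2) = (if i1 = k1 \<and> j = k2 + 1 then 1 else 0)"
      using that by (simp add: shm_def)
    show ?thesis unfolding e1 e2 e3 e4 e5 ..
  qed
  have tp: "(X' ^\<^sub>m (Suc m * s)) $$ ((N - 1)*(s+1)+s, 0) = qb (\<chi> a) (Suc m * s) s * (X ^\<^sub>m (Suc m * s - s)) $$ (N - 1, 0)"
    by (rule tens_pow[OF cX N0 cX' ent]) (use N0 in auto)
  have idx: "(s+1)^Suc m - 1 = (N - 1)*(s+1)+s"
  proof -
    have "(N - 1)*(s+1)+s + 1 = N*(s+1)" using N0 by (cases N) auto
    then show ?thesis using NS by simp
  qed
  have "qb (\<chi> a) (Suc m * s) s = of_nat (Suc m)" by (rule qb_mult[OF s0 cs ord])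
  moreover have "(of_nat (Suc m) :: 'k) \<noteq> 0" by (rule of_nat_neq_0)
  moreover have "(X ^\<^sub>m (m * s)) $$ (N - 1, 0) \<noteq> 0" using Suc.IH by (simp add: X_def N_def)
  ultimately have "(X' ^\<^sub>m (Suc m * s)) $$ ((N - 1)*(s+1)+s, 0) \<noteq> 0" using tp by simp
  then show ?case unfolding idx X'_def by simp
qed

lemma strs_rep:
  "snd (hdsum_list (map (\<lambda>(l,e). Vmod \<chi> l (\<lambda>g. \<chi> g ^ e)) L)) = SL L \<and>
   fst (hdsum_list (map (\<lambda>(l,e). Vmod \<chi> l (\<lambda>g. \<chi> g ^ e)) L)) = (\<lambda>g. dmat (sum_list (map fst L)) (\<lambda>i. \<chi> g ^ degL L i))"
proof (induction L)
  case Nil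
  have "(\<lambda>g. 0\<^sub>m 0 0 :: 'k mat) = (\<lambda>g. dmat 0 (\<lambda>i. \<chi> g ^ degL [] i))"
  proof
    fix g show "(0\<^sub>m 0 0 :: 'k mat) = dmat 0 (\<lambda>i. \<chi> g ^ degL [] i)" by (rule eq_matI) (auto simp: dmat_def)
  qed
  then show ?case by (simp add: hzero_def)
next
  case (Cons p L)
  obtain l e where p: "p = (l,e)" by (cases p)
  define H where "H = hdsum_list (map (\<lambda>(l,e). Vmod \<chi> l (\<lambda>g. \<chi> g ^ e)) L)"
  define V where "V = Vmod \<chi> l (\<lambda>g. \<chi> g ^ e)"
  define sm where "sm = sum_list (map fst L)"
  have sH: "snd H = SL L" and fH: "fst H = (\<lambda>g. dmat sm (\<lambda>i. \<chi> g ^ degL L i))" using Cons by (auto simp: H_def sm_def)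
  have cSL: "(SL L :: 'k mat) \<in> carrier_mat sm sm" using SL_carrier[of L] by (simp add: sm_def)
  have hH: "hdim H = sm" using sH cSL by (simp add: hdim_def)
  have hV: "hdim V = l" by (simp add: hdim_def V_def Vmod_snd)
  have eq: "hdsum_list (map (\<lambda>(l,e). Vmod \<chi> l (\<lambda>g. \<chi> g ^ e)) (p # L)) = hdsum V H"
    by (simp add: p H_def V_def)
  have s1: "snd (hdsum V H) = SL (p # L)"
    unfolding hdsum_def snd_conv hH hV sH using p by (simp add: V_def Vmod_snd sm_def)
  have f1: "fst (hdsum V H) = (\<lambda>g. dmat (sum_list (map fst (p # L))) (\<lambda>i. \<chi> g ^ degL (p # L) i))"
  proof
    fix g
    have "fst (hdsum V H) g = four_block_mat (dmat l (\<lambda>i. \<chi> g ^ i * \<chi> g ^ e)) (0\<^sub>m l sm) (0\<^sub>m sm l) (dmat sm (\<lambda>i. \<chi> g ^ degL L i))"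
      unfolding hdsum_def fst_conv hH hV fH by (simp add: V_def Vmod_fst)
    also have "\<dots> = dmat (sum_list (map fst (p # L))) (\<lambda>i. \<chi> g ^ degL (p # L) i)"
    proof (rule eq_matI)
      fix i j assume "i < dim_row (dmat (sum_list (map fst (p # L))) (\<lambda>i. \<chi> g ^ degL (p # L) i))"
        "j < dim_col (dmat (sum_list (map fst (p # L))) (\<lambda>i. \<chi> g ^ degL (p # L) i))"
      then have ij: "i < l + sm" "j < l + sm" using p by (auto simp: dmat_def sm_def)
      have dd: "dim_row (dmat l f) = l" "dim_col (dmat l f) = l" for l and f :: "nat \<Rightarrow> 'k" by (auto simp: dmat_def)
      show "four_block_mat (dmat l (\<lambda>i. \<chi> g ^ i * \<chi> g ^ e)) (0\<^sub>m l sm) (0\<^sub>m sm l) (dmat sm (\<lambda>i. \<chi> g ^ degL L i)) $$ (i, j) =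
        dmat (sum_list (map fst (p # L))) (\<lambda>i. \<chi> g ^ degL (p # L) i) $$ (i, j)"
        using ij p by (auto simp: dmat_def sm_def power_add mult.commute)
    qed (use p in \<open>auto simp: dmat_def sm_def\<close>)
    finally show "fst (hdsum V H) g = dmat (sum_list (map fst (p # L))) (\<lambda>i. \<chi> g ^ degL (p # L) i)" .
  qed
  show ?case unfolding eq using s1 f1 by simp
qed

end

theorem lemma4p9:
  fixes G :: "'g monoid" and \<chi> :: "'g \<Rightarrow> 'k::field_char_0" and a :: 'g and s :: nat
  assumes "alg_closed TYPE('k)"
    and "group G"
    and "a \<in> carrier G" and "\<forall>g\<in>carrier G. a \<otimes>\<^bsub>G\<^esub> g = g \<otimes>\<^bsub>G\<^esub> a"
    and "character G \<chi>" and "\<chi> a \<noteq> 1"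
    and "\<forall>n::nat. n > 0 \<longrightarrow> (\<exists>g\<in>carrier G. \<chi> g ^ n \<noteq> 1)"
    and "s > 0" and "inverse (\<chi> a) ^ s = 1"
    and "\<forall>n. 0 < n \<and> n < s \<longrightarrow> inverse (\<chi> a) ^ n \<noteq> 1"
  shows "\<forall>m::nat. \<exists>E. in_P G \<chi> s m E \<and>
           hmod_iso G (htpow \<chi> a (Vmod \<chi> (s + 1) eps_char) m)
                      (hdsum (Vmod \<chi> (m * s + 1) eps_char) E)"
proof
  fix m :: nat
  have char: "character G \<chi>" by fact
  have s0: "0 < s" by fact
  have cs: "\<chi> a ^ s = 1"
  proof -
    have "inverse (\<chi> a ^ s) = 1" using assms(9) by (simp add: power_inverse)
    then show ?thesis by simp
  qed
  have ord: "\<chi> a ^ k \<noteq> 1" if "0 < k" "k < s" for k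
  proof
    assume "\<chi> a ^ k = 1"
    then have "inverse (\<chi> a) ^ k = 1" by (simp add: power_inverse)
    then show False using assms(10) that by blast
  qed
  define M where "M = htpow \<chi> a (Vmod \<chi> (s + 1) eps_char) m"
  define X where "X = snd M"
  define n where "n = (s+1)^m"
  define d where "d = degm s m"
  define t where "t = m * s + 1"
  have rep: "fst M = (\<lambda>g. dmat n (\<lambda>i. \<chi> g ^ d i))" "X \<in> carrier_mat n n" "gr d d 1 X"
    using htpow_rep[of \<chi> a s m] by (auto simp: M_def X_def n_def d_def)
  have n0: "0 < n" unfolding n_def by simp
  have dle: "d i \<le> m * s" if "i < n" for i using degm_le that by (simp add: d_def n_def)
  have tlt: "m * s < t" by (simp add: t_def)
  have tz: "X ^\<^sub>m t = 0\<^sub>m n n" by (rule gr_nilp[OF rep(3) rep(2) dle tlt])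
  have nz: "(X ^\<^sub>m (t - 1)) $$ (n - 1, 0) \<noteq> 0"
    using top_nz[of \<chi> a s m, OF cs ord s0] by (simp add: X_def M_def n_def t_def)
  obtain L' P Pi where dc: "\<forall>p\<in>set L'. 1 \<le> fst p" "sum_list (map fst L') + t = n" "P \<in> carrier_mat n n"
    "Pi \<in> carrier_mat n n" "P * Pi = 1\<^sub>m n" "Pi * P = 1\<^sub>m n" "P * X = SL ((t, d 0) # L') * P"
    "gr (degL ((t, d 0) # L')) d 0 P"
    using decomp_first[OF rep(2) rep(3) _ tz _ n0 nz] n0 by (auto simp: t_def)
  have d0: "d 0 = 0" by (simp add: d_def degm_0)
  define Lt where "Lt = (t, 0::nat) # L'"
  define DN where "DN = degL Lt"
  have PX: "P * X = SL Lt * P" and grP: "gr DN d 0 P" using dc(7,8) d0 by (auto simp: Lt_def DN_def)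
  define Lc where "Lc = map (\<lambda>(l,e). (l, \<lambda>g. \<chi> g ^ e)) L'"
  define E where "E = hdsum_list (map (\<lambda>(i,\<mu>). Vmod \<chi> i \<mu>) Lc)"
  have Veps: "Vmod \<chi> t (\<lambda>g. \<chi> g ^ 0) = Vmod \<chi> t eps_char" by (simp add: eps_char_def)
  have NE: "hdsum (Vmod \<chi> (m * s + 1) eps_char) E = hdsum_list (map (\<lambda>(l,e). Vmod \<chi> l (\<lambda>g. \<chi> g ^ e)) Lt)"
  proof -
    have mapeq: "map (\<lambda>(i,\<mu>). Vmod \<chi> i \<mu>) (map (\<lambda>(l,e). (l, \<lambda>g. \<chi> g ^ e)) L') = map (\<lambda>(l,e). Vmod \<chi> l (\<lambda>g. \<chi> g ^ e)) L'"
      by (induction L') auto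
    show ?thesis unfolding E_def Lc_def mapeq Lt_def t_def using Veps[unfolded t_def] by simp
  qed
  have sLt: "sum_list (map fst Lt) = n" using dc(2) by (simp add: Lt_def)
  have Nrep: "snd (hdsum (Vmod \<chi> (m * s + 1) eps_char) E) = SL Lt"
    "fst (hdsum (Vmod \<chi> (m * s + 1) eps_char) E) = (\<lambda>g. dmat n (\<lambda>i. \<chi> g ^ DN i))"
    unfolding NE using strs_rep[of \<chi> Lt] sLt by (auto simp: DN_def)
  have cSL: "(SL Lt :: 'k mat) \<in> carrier_mat n n" using SL_carrier[of Lt] sLt by simp
  have grPi: "gr d DN 0 Pi" by (rule gr_inv[OF grP dc(3) dc(4) dc(5) dc(6)])
  have DNt: "DN i = degL L' (i - t)" if "t \<le> i" for i using that by (simp add: DN_def Lt_def)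
  have DN0: "DN 0 = 0" by (simp add: DN_def Lt_def t_def)
  have bound: "l \<le> m * s" if le: "(l, e) \<in> set L'" for l e
  proof (rule ccontr)
    assume "\<not> l \<le> m * s"
    then have lt: "m * s < l" by simp
    obtain off where off: "off + l \<le> sum_list (map fst L')" "\<forall>i<l. degL L' (off+i) = e + i"
      using pos_in_list[OF le] by blast
    have rowex: "\<exists>k<n. P $$ (p, k) \<noteq> 0" if "p < n" for p
    proof (rule ccontr)
      assume "\<not> ?thesis"
      then have "(P * Pi) $$ (p,p) = 0"
        using mult_entry[of p P p Pi] that dc(3,4) by simp
      then show False using dc(5) that by simp
    qed
    define p1 where "p1 = t + off + (l - 1)"
    have p1n: "p1 < n" using off(1) dc(2) lt by (simp add: p1_def)
    obtain k where k: "k < n" "P $$ (p1, k) \<noteq> 0" using rowex[OF p1n] by blast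
    have "DN p1 = d k" using grP k p1n dc(3) unfolding gr_def by auto
    moreover have "DN p1 = e + (l - 1)"
    proof -
      have A: "DN p1 = degL L' (off + (l - 1))" using DNt[of p1] by (simp add: p1_def)
      have "l - 1 < l" using lt by simp
      then have B: "degL L' (off + (l - 1)) = e + (l - 1)" using off(2) by blast
      show ?thesis using A B by simp
    qed
    moreover have "d k \<le> m * s" using dle k(1) by simp
    ultimately have e0: "e = 0" using lt by simp
    define p2 where "p2 = t + off"
    have p2n: "p2 < n" and p2t: "t \<le> p2" and p20: "p2 \<noteq> 0" using off(1) dc(2) lt by (auto simp: p2_def t_def)
    have DNp2: "DN p2 = 0"
    proof -
      have A: "DN p2 = degL L' (off + 0)" using DNt[of p2] by (simp add: p2_def)
      have "0 < l" using lt by simp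
      then have B: "degL L' (off + 0) = e + 0" using off(2) by blast
      show ?thesis using A B e0 by simp
    qed
    have col0: "Pi $$ (k', q) = 0" if "k' < n" "q < n" "DN q = 0" "k' \<noteq> 0" for k' q
    proof (rule ccontr)
      assume "Pi $$ (k', q) \<noteq> 0"
      then have "d k' = DN q" using grPi that dc(4) unfolding gr_def by auto
      then have "d k' = 0" using that by simp
      then have "k' = 0" using degm_zero[of k' s m] that by (simp add: d_def n_def)
      then show False using that by simp
    qed
    have ent: "(P * Pi) $$ (i, q) = P $$ (i, 0) * Pi $$ (0, q)" if "i < n" "q < n" "DN q = 0" for i q
    proof -
      have "(P * Pi) $$ (i, q) = (\<Sum>k<n. P $$ (i,k) * Pi $$ (k,q))"
        using mult_entry[of i P q Pi] that dc(3,4) by simp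
      also have "\<dots> = P $$ (i, 0) * Pi $$ (0, q)"
        by (rule sum_single) (use n0 col0 that in auto)
      finally show ?thesis .
    qed
    have "P $$ (p2, 0) * Pi $$ (0, p2) = 1" using ent[OF p2n p2n DNp2] dc(5) p2n by simp
    then have a1: "Pi $$ (0, p2) \<noteq> 0" by auto
    have "P $$ (0, 0) * Pi $$ (0, p2) = 0" using ent[OF n0 p2n DNp2] dc(5) p2n p20 by simp
    then have a2: "P $$ (0, 0) = 0" using a1 by simp
    have "P $$ (0, 0) * Pi $$ (0, 0) = 1" using ent[OF n0 n0 DN0] dc(5) n0 by simp
    then show False using a2 by simp
  qed
  show "\<exists>E. in_P G \<chi> s m E \<and> hmod_iso G M (hdsum (Vmod \<chi> (m * s + 1) eps_char) E)"
    unfolding M_def[symmetric]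
  proof (intro exI conjI)
    show "in_P G \<chi> s m E"
      unfolding in_P_def
    proof (intro exI conjI)
      show "E = hdsum_list (map (\<lambda>(i,\<mu>). Vmod \<chi> i \<mu>) Lc)" by (simp add: E_def)
      show "\<forall>(i, \<mu>)\<in>set Lc. 1 \<le> i \<and> i \<le> m * s \<and> character G \<mu>"
      proof (intro ballI, clarify)
        fix i \<mu> assume "(i, \<mu>) \<in> set Lc"
        then obtain e where ie: "(i, e) \<in> set L'" "\<mu> = (\<lambda>g. \<chi> g ^ e)" by (auto simp: Lc_def)
        have "1 \<le> i" using dc(1) ie(1) by auto
        moreover have "i \<le> m * s" using bound[OF ie(1)] .
        moreover have "character G \<mu>" using char unfolding character_def ie(2)
          by (simp add: power_mult_distrib)
        ultimately show "1 \<le> i \<and> i \<le> m * s \<and> character G \<mu>" by simp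
      qed
    qed
    show "hmod_iso G M (hdsum (Vmod \<chi> (m * s + 1) eps_char) E)"
      unfolding hmod_iso_def
    proof (intro exI conjI)
      have hM: "hdim M = n" using rep(2) by (simp add: hdim_def X_def)
      have hN: "hdim (hdsum (Vmod \<chi> (m * s + 1) eps_char) E) = n" using Nrep(1) cSL by (simp add: hdim_def)
      show "P \<in> carrier_mat (hdim (hdsum (Vmod \<chi> (m * s + 1) eps_char) E)) (hdim M)" using dc(3) hM hN by simp
      show "Pi \<in> carrier_mat (hdim M) (hdim (hdsum (Vmod \<chi> (m * s + 1) eps_char) E))" using dc(4) hM hN by simp
      show "P * Pi = 1\<^sub>m (hdim (hdsum (Vmod \<chi> (m * s + 1) eps_char) E))" using dc(5) hN by simp
      show "Pi * P = 1\<^sub>m (hdim M)" using dc(6) hM by simp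
      show "\<forall>g\<in>carrier G. P * fst M g = fst (hdsum (Vmod \<chi> (m * s + 1) eps_char) E) g * P"
      proof
        fix g
        show "P * fst M g = fst (hdsum (Vmod \<chi> (m * s + 1) eps_char) E) g * P"
          unfolding rep(1) Nrep(2) using gr0_comm[OF grP dc(3), of "\<lambda>e. \<chi> g ^ e"] by simp
      qed
      show "P * snd M = snd (hdsum (Vmod \<chi> (m * s + 1) eps_char) E) * P"
        unfolding Nrep(1) X_def[symmetric] by (rule PX)
    qed
  qed
qed

end
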